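(* Let $\mathcal X=\{x\in\mathbb{R}^{n_1}_+: x_i\in\{0,1\}\ \forall i\in\mathcal I\}$, and for $x\in\mathcal X$ let $f(x)$ be the optimal value of the problem $(\mathrm{Inner}(x))$ defined in the context ($f(x)=+\infty$ if it is infeasible). Assume the polyhedra $P_1$ and $P_2$ defined in the context are nonempty. Let $\mathcal J_1,\mathcal R_1$ be the sets of extreme points and extreme rays of $P_1$, and $\mathcal J_2,\mathcal R_2$ the sets of extreme points and extreme rays of $P_2$. Then the problem (MIP) $\min_{x\in\mathcal X} c_x^Tx+f(x)$ is equivalent (same optimal value and same optimal $x$) to the problem $\min_{x\in\mathcal X,\,t\in\mathbb{R}}\ c_x^Tx+t$ subject to (a) $t\ge \hat\psi^T(b-Ax)+\hat u_y^T(h_y-G_{xy}x)-\hat w\,(d^T\hat y-\hat v^T(k+K_xx))$ for all $(\hat\psi,\hat u_y,\hat w)\in\mathcal J_2$, $(\hat y,\hat v)\in\mathcal J_1$; (b) $d^T\tilde y-\tilde v^T(k+K_xx)\ge 0$ for all $(\tilde y,\tilde v)\in\mathcal R_1$; (c) $0\ge \tilde\psi^T(b-Ax)+\tilde u_y^T(h_y-G_{xy}x)$ for all $(\tilde\psi,\tilde u_y,0)\in\mathcal R_2$; (d) $0\ge \tilde\psi^T(b-Ax)+\tilde u_y^T(h_y-G_{xy}x)-\tilde w\,(d^T\hat y-\hat v^T(k+K_xx))$ for all $(\hat y,\hat v)\in\mathcal J_1$ and all $(\tilde\psi,\tilde u_y,\tilde w)\in\mathcal R_2$ with $\tilde w>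0$.
   Context: Data: $c_x\in\mathbb{R}^{n_1}$, $\mathcal I\subseteq\{1,\dots,n_1\}$, $A\in\mathbb{R}^{m\times n_1}$, $B\in\mathbb{R}^{m\times n_2}$, $b\in\mathbb{R}^m$, $c_y,d\in\mathbb{R}^{n_2}$, $G_{xy}\in\mathbb{R}^{p\times n_1}$, $G_y\in\mathbb{R}^{p\times n_2}$, $h_y\in\mathbb{R}^p$, $K_\psi\in\mathbb{R}^{q\times m}$, $K_s\in\mathbb{R}^{q\times r}$, $K_x\in\mathbb{R}^{q\times n_1}$, $k\in\mathbb{R}^q$ (the $K$'s and $k$ come from a McCormick linearization of bilinear terms in a strong-duality reformulation of a bilevel program with lower level $\min_{y\ge0}\{d^Ty:Ax+By\ge b\}$). $\mathbf 1$ is the all-ones vector. $(\mathrm{Inner}(x))$: minimize $c_y^Ty$ over $y\in\mathbb{R}^{n_2}_+,\psi\in\mathbb{R}^m_+,s\in\mathbb{R}^r_+$ subject to $G_yy\ge h_y-G_{xy}x$, $By\ge b-Ax$, $-B^T\psi\ge -d$, $-d^Ty+\psi^Tb-s^T\mathbf 1\ge 0$, $K_\psi\psi+K_ss\ge k+K_xx$. $P_1=\{(y,v)\ge 0: By-K_\psi^Tv\ge b,\ K_s^Tv\le\mathbf 1\}$; $P_2=\{(\psi,u_y,w)\ge 0: B^T\psi+G_y^Tu_y\le dw+c_y\}$ ($w$ scalar). Extreme rays are those of the recession cones of these (pointed) polyhedra. *)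

theory Defs
  imports "HOL-Analysis.Analysis"
begin

definition recession_cone :: "'a::real_vector set \<Rightarrow> 'a set" where
  "recession_cone S = {d. \<forall>x\<in>S. \<forall>t::real. t \<ge> 0 \<longrightarrow> x + t *\<^sub>R d \<in> S}"

text \<open>Every positive multiple of an extreme ray
  direction is again one; the set of all such directions represents the extreme rays.\<close>
definition extreme_ray_of :: "'a::real_vector \<Rightarrow> 'a set \<Rightarrow> bool" where
  "extreme_ray_of d C \<longleftrightarrow> d \<in> C \<and> d \<noteq> 0 \<and> {t *\<^sub>R d | t::real. t \<ge> 0} face_of C"

definition extreme_points :: "'a::real_vector set \<Rightarrow> 'a set" where
  "extreme_points P = {z. z extreme_point_of P}"

definition extreme_rays :: "'a::real_vector set \<Rightarrow> 'a set" where
  "extreme_rays P = {z. extreme_ray_of z (recession_cone P)}"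

definition Xset :: "'n1 set \<Rightarrow> (real^'n1) set" where
  "Xset I = {x. 0 \<le> x \<and> (\<forall>i\<in>I. x $ i = 0 \<or> x $ i = 1)}"

definition inner_feasible ::
  "real^'n1^'m \<Rightarrow> real^'n2^'m \<Rightarrow> real^'m \<Rightarrow> real^'n2 \<Rightarrow>
   real^'n1^'p \<Rightarrow> real^'n2^'p \<Rightarrow> real^'p \<Rightarrow>
   real^'m^'q \<Rightarrow> real^'r^'q \<Rightarrow> real^'n1^'q \<Rightarrow> real^'q \<Rightarrow>
   real^'n1 \<Rightarrow> ((real^'n2) \<times> (real^'m) \<times> (real^'r)) set" where
  "inner_feasible A B b d Gxy Gy hy Kpsi Ks Kx k x =
     {(y, psi, s). 0 \<le> y \<and> 0 \<le> psi \<and> 0 \<le> s \<and>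
        Gy *v y \<ge> hy - Gxy *v x \<and>
        B *v y \<ge> b - A *v x \<and>
        - (transpose B *v psi) \<ge> - d \<and>
        - (d \<bullet> y) + psi \<bullet> b - s \<bullet> 1 \<ge> 0 \<and>
        Kpsi *v psi + Ks *v s \<ge> k + Kx *v x}"

definition inner_value ::
  "real^'n2 \<Rightarrow> real^'n1^'m \<Rightarrow> real^'n2^'m \<Rightarrow> real^'m \<Rightarrow> real^'n2 \<Rightarrow>
   real^'n1^'p \<Rightarrow> real^'n2^'p \<Rightarrow> real^'p \<Rightarrow>
   real^'m^'q \<Rightarrow> real^'r^'q \<Rightarrow> real^'n1^'q \<Rightarrow> real^'q \<Rightarrow>
   real^'n1 \<Rightarrow> ereal" where
  "inner_value cy A B b d Gxy Gy hy Kpsi Ks Kx k x =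
     Inf ((\<lambda>(y, psi, s::real^'r). ereal (cy \<bullet> y)) ` inner_feasible A B b d Gxy Gy hy Kpsi Ks Kx k x)"

definition P1set :: "real^'n2^'m \<Rightarrow> real^'m \<Rightarrow> real^'m^'q \<Rightarrow> real^'r^'q \<Rightarrow>
    ((real^'n2) \<times> (real^'q)) set" where
  "P1set B b Kpsi Ks = {(y, v). 0 \<le> y \<and> 0 \<le> v \<and>
      B *v y - transpose Kpsi *v v \<ge> b \<and> transpose Ks *v v \<le> 1}"

definition P2set :: "real^'n2^'m \<Rightarrow> real^'n2 \<Rightarrow> real^'n2^'p \<Rightarrow> real^'n2 \<Rightarrow>
    ((real^'m) \<times> (real^'p) \<times> real) set" where
  "P2set B d Gy cy = {(psi, uy, w). 0 \<le> psi \<and> 0 \<le> uy \<and> 0 \<le> w \<and>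
      transpose B *v psi + transpose Gy *v uy \<le> w *\<^sub>R d + cy}"

definition reform_feasible ::
  "'n1 set \<Rightarrow> real^'n2 \<Rightarrow> real^'n1^'m \<Rightarrow> real^'n2^'m \<Rightarrow> real^'m \<Rightarrow> real^'n2 \<Rightarrow>
   real^'n1^'p \<Rightarrow> real^'n2^'p \<Rightarrow> real^'p \<Rightarrow>
   real^'m^'q \<Rightarrow> real^'r^'q \<Rightarrow> real^'n1^'q \<Rightarrow> real^'q \<Rightarrow>
   ((real^'n1) \<times> real) set" where
  "reform_feasible I cy A B b d Gxy Gy hy Kpsi Ks Kx k =
    (let J1 = extreme_points (P1set B b Kpsi Ks); R1 = extreme_rays (P1set B b Kpsi Ks);
         J2 = extreme_points (P2set B d Gy cy); R2 = extreme_rays (P2set B d Gy cy)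
     in {(x, t). x \<in> Xset I \<and>
        (\<forall>(psi, uy, w)\<in>J2. \<forall>(y, v)\<in>J1.
           t \<ge> psi \<bullet> (b - A *v x) + uy \<bullet> (hy - Gxy *v x)
                - w * (d \<bullet> y - v \<bullet> (k + Kx *v x))) \<and>
        (\<forall>(y, v)\<in>R1. d \<bullet> y - v \<bullet> (k + Kx *v x) \<ge> 0) \<and>
        (\<forall>psi uy. (psi, uy, 0) \<in> R2 \<longrightarrow>
           0 \<ge> psi \<bullet> (b - A *v x) + uy \<bullet> (hy - Gxy *v x)) \<and>
        (\<forall>(y, v)\<in>J1. \<forall>(psi, uy, w)\<in>R2. w > 0 \<longrightarrow>
           0 \<ge> psi \<bullet> (b - A *v x) + uy \<bullet> (hy - Gxy *v x)
                - w * (d \<bullet> y - v \<bullet> (k + Kx *v x)))})"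

end

theory Submission
  imports Defs
begin


definition polyh :: "('a::real_inner \<times> real) set \<Rightarrow> 'a set" where
  "polyh S = {z. \<forall>p\<in>S. fst p \<bullet> z \<le> snd p}"

lemma slope_zero:
  fixes al be ga :: real
  assumes "\<forall>t. al + t * be \<le> ga" shows "be = 0"
proof (rule ccontr)
  assume "be \<noteq> 0"
  have "al + ((ga - al + 1) / be) * be \<le> ga" using assms by blast
  with \<open>be \<noteq> 0\<close> show False by simp
qed

lemma slope_nonpos:
  fixes al be ga :: real
  assumes "\<forall>t\<ge>0. al + t * be \<le> ga" shows "be \<le> 0"
proof (rule ccontr)
  assume "\<not> be \<le> 0"
  hence b: "be > 0" by simp
  have "al \<le> ga" using assms[rule_format, of 0] by simp
  hence "(ga - al + 1) / be \<ge> 0" using b by simp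
  hence "al + ((ga - al + 1) / be) * be \<le> ga" using assms by blast
  with b show False by simp
qed

lemma conv_eq:
  fixes u x y be :: real
  assumes "0 < u" "u < 1" "x \<le> be" "y \<le> be" "(1 - u) * x + u * y = be"
  shows "x = be \<and> y = be"
proof -
  have e: "(1 - u) * (be - x) + u * (be - y) = 0" using assms(5) by (simp add: algebra_simps)
  have a1: "(1 - u) * (be - x) \<ge> 0" using assms by simp
  have a2: "u * (be - y) \<ge> 0" using assms by simp
  have "(1 - u) * (be - x) = 0" "u * (be - y) = 0" using e a1 a2 by linarith+
  thus ?thesis using assms by auto
qed

lemma rec_char:
  assumes "z0 \<in> polyh S"
  shows "recession_cone (polyh S) = {d. \<forall>p\<in>S. fst p \<bullet> d \<le> 0}"
proof
  show "recession_cone (polyh S) \<subseteq> {d. \<forall>p\<in>S. fst p \<bullet> d \<le> 0}"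
  proof
    fix d assume d: "d \<in> recession_cone (polyh S)"
    show "d \<in> {d. \<forall>p\<in>S. fst p \<bullet> d \<le> 0}"
    proof (clarify)
      fix a be assume p: "(a, be) \<in> S"
      have "\<forall>t\<ge>0. a \<bullet> z0 + t * (a \<bullet> d) \<le> be"
      proof (intro allI impI)
        fix t :: real assume "t \<ge> 0"
        hence "z0 + t *\<^sub>R d \<in> polyh S" using d assms unfolding recession_cone_def by blast
        thus "a \<bullet> z0 + t * (a \<bullet> d) \<le> be" using p unfolding polyh_def
          by (force simp: inner_add_right)
      qed
      thus "fst (a, be) \<bullet> d \<le> 0" using slope_nonpos by simp
    qed
  qed
next
  show "{d. \<forall>p\<in>S. fst p \<bullet> d \<le> 0} \<subseteq> recession_cone (polyh S)"
  proof
    fix d assume d: "d \<in> {d. \<forall>p\<in>S. fst p \<bullet> d \<le> 0}"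
    show "d \<in> recession_cone (polyh S)"
      unfolding recession_cone_def
    proof (clarify)
      fix x and t :: real assume x: "x \<in> polyh S" and t: "t \<ge> 0"
      show "x + t *\<^sub>R d \<in> polyh S" unfolding polyh_def
      proof (clarify)
        fix p assume p: "p \<in> S"
        have "fst p \<bullet> x \<le> snd p" using x p by (auto simp: polyh_def)
        moreover have "t * (fst p \<bullet> d) \<le> 0" using d p t by (simp add: mult_nonneg_nonpos)
        ultimately show "fst p \<bullet> (x + t *\<^sub>R d) \<le> snd p" by (simp add: inner_add_right)
      qed
    qed
  qed
qed

lemma vertex_exists:
  fixes S :: "('a::euclidean_space \<times> real) set"
  assumes fin: "finite S"
    and noline: "\<And>z d. (\<forall>t. z + t *\<^sub>R d \<in> polyh S) \<Longrightarrow> d = 0"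
    and cpos: "\<And>d. (\<forall>p\<in>S. fst p \<bullet> d \<le> 0) \<Longrightarrow> c \<bullet> d \<ge> 0"
  shows "q \<in> polyh S \<Longrightarrow> \<exists>j\<in>polyh S. c \<bullet> j \<le> c \<bullet> q \<and>
            (\<forall>e. (\<forall>p\<in>S. fst p \<bullet> j = snd p \<longrightarrow> fst p \<bullet> e = 0) \<longrightarrow> e = 0)"
proof (induction "card {p\<in>S. fst p \<bullet> q < snd p}" arbitrary: q rule: less_induct)
  case less
  have qP: "\<And>p. p \<in> S \<Longrightarrow> fst p \<bullet> q \<le> snd p" using less.prems by (auto simp: polyh_def)
  show ?case
  proof (cases "\<forall>e. (\<forall>p\<in>S. fst p \<bullet> q = snd p \<longrightarrow> fst p \<bullet> e = 0) \<longrightarrow> e = 0")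
    case True then show ?thesis using less.prems by auto
  next
    case False
    then obtain e where e0: "e \<noteq> 0" and eact: "\<And>p. p\<in>S \<Longrightarrow> fst p \<bullet> q = snd p \<Longrightarrow> fst p \<bullet> e = 0"
      by blast
    have "\<exists>d. (d = e \<or> d = -e) \<and> c \<bullet> d \<le> 0 \<and> (\<exists>p\<in>S. fst p \<bullet> d > 0)"
    proof -
      define d1 where "d1 = (if c \<bullet> e \<le> 0 then e else -e)"
      have d1: "d1 = e \<or> d1 = -e" "c \<bullet> d1 \<le> 0" by (auto simp: d1_def)
      show ?thesis
      proof (cases "\<exists>p\<in>S. fst p \<bullet> d1 > 0")
        case True then show ?thesis using d1 by blast
      next
        case F1: False
        then have "\<forall>p\<in>S. fst p \<bullet> d1 \<le> 0" by (auto simp: not_less)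
        then have "c \<bullet> d1 \<ge> 0" by (rule cpos)
        hence cd: "c \<bullet> d1 = 0" using d1 by linarith
        show ?thesis
        proof (cases "\<exists>p\<in>S. fst p \<bullet> (-d1) > 0")
          case True
          have "-d1 = e \<or> -d1 = -e" using d1(1) by auto
          thus ?thesis using cd True by (intro exI[of _ "-d1"]) auto
        next
          case False
          with F1 have z: "\<forall>p\<in>S. fst p \<bullet> d1 = 0" by (force simp: not_less)
          have "\<forall>t. q + t *\<^sub>R d1 \<in> polyh S" using qP z by (auto simp: polyh_def inner_add_right)
          hence "d1 = 0" by (rule noline)
          thus ?thesis using d1 e0 by auto
        qed
      qed
    qed
    then obtain d where dd: "d = e \<or> d = -e" and cd: "c \<bullet> d \<le> 0" and ex: "\<exists>p\<in>S. fst p \<bullet> d > 0"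
      by blast
    have dact: "\<And>p. p\<in>S \<Longrightarrow> fst p \<bullet> q = snd p \<Longrightarrow> fst p \<bullet> d = 0" using dd eact by auto
    define T where "T = {p\<in>S. fst p \<bullet> d > 0}"
    define rat where "rat p = (snd p - fst p \<bullet> q) / (fst p \<bullet> d)" for p
    have finT: "finite T" "T \<noteq> {}" using fin ex by (auto simp: T_def)
    define tau where "tau = Min (rat ` T)"
    have "tau \<in> rat ` T" unfolding tau_def using finT by simp
    then obtain p0 where p0: "p0 \<in> T" "rat p0 = tau" by auto
    have tle: "\<And>p. p \<in> T \<Longrightarrow> tau \<le> rat p" unfolding tau_def using finT by simp
    have p0S: "p0 \<in> S" and p0d: "fst p0 \<bullet> d > 0" using p0 by (auto simp: T_def)
    have tnn: "tau \<ge> 0" using p0 qP[OF p0S] p0d by (auto simp: rat_def)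
    define q' where "q' = q + tau *\<^sub>R d"
    have q'i: "\<And>p. fst p \<bullet> q' = fst p \<bullet> q + tau * (fst p \<bullet> d)"
      by (simp add: q'_def inner_add_right)
    have q'P: "q' \<in> polyh S" unfolding polyh_def
    proof (clarify)
      fix p assume p: "p \<in> S"
      show "fst p \<bullet> q' \<le> snd p"
      proof (cases "fst p \<bullet> d > 0")
        case True
        hence "p \<in> T" using p by (auto simp: T_def)
        hence "tau \<le> (snd p - fst p \<bullet> q) / (fst p \<bullet> d)" using tle rat_def by auto
        hence "tau * (fst p \<bullet> d) \<le> snd p - fst p \<bullet> q" using True by (simp add: le_divide_eq)
        thus ?thesis using q'i[of p] by linarith
      next
        case False
        hence "tau * (fst p \<bullet> d) \<le> 0" using tnn by (simp add: mult_nonneg_nonpos)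
        thus ?thesis using q'i[of p] qP[OF p] by linarith
      qed
    qed
    have cq': "c \<bullet> q' \<le> c \<bullet> q" using q'i[of "(c, 0)"] tnn cd
      by (simp add: mult_nonneg_nonpos)
    have p0eq: "fst p0 \<bullet> q' = snd p0"
    proof -
      have "tau * (fst p0 \<bullet> d) = snd p0 - fst p0 \<bullet> q"
        using p0(2) p0d by (auto simp: rat_def)
      thus ?thesis using q'i[of p0] by linarith
    qed
    have p0in: "p0 \<in> {p\<in>S. fst p \<bullet> q < snd p}"
      using p0S p0d dact[OF p0S] qP[OF p0S] by force
    have sub: "{p\<in>S. fst p \<bullet> q' < snd p} \<subseteq> {p\<in>S. fst p \<bullet> q < snd p} - {p0}"
    proof
      fix p assume "p \<in> {p\<in>S. fst p \<bullet> q' < snd p}"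
      hence p: "p \<in> S" "fst p \<bullet> q' < snd p" by auto
      have "fst p \<bullet> q \<noteq> snd p" using dact[OF p(1)] q'i[of p] p(2) by auto
      hence "fst p \<bullet> q < snd p" using qP[OF p(1)] by simp
      moreover have "p \<noteq> p0" using p0eq p(2) by auto
      ultimately show "p \<in> {p\<in>S. fst p \<bullet> q < snd p} - {p0}" using p by auto
    qed
    have "card {p\<in>S. fst p \<bullet> q' < snd p} < card {p\<in>S. fst p \<bullet> q < snd p}"
    proof -
      have "{p\<in>S. fst p \<bullet> q' < snd p} \<subset> {p\<in>S. fst p \<bullet> q < snd p}" using sub p0in by blast
      thus ?thesis using fin by (intro psubset_card_mono) auto
    qed
    from less.hyps[OF this q'P] obtain j where "j \<in> polyh S" "c \<bullet> j \<le> c \<bullet> q'"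
      "\<forall>e. (\<forall>p\<in>S. fst p \<bullet> j = snd p \<longrightarrow> fst p \<bullet> e = 0) \<longrightarrow> e = 0" by blast
    thus ?thesis using cq' by (intro bexI[of _ j]) auto
  qed
qed

lemma rank_extreme:
  assumes jP: "j \<in> polyh S" and rk: "\<forall>e. (\<forall>p\<in>S. fst p \<bullet> j = snd p \<longrightarrow> fst p \<bullet> e = 0) \<longrightarrow> e = 0"
  shows "j extreme_point_of polyh S"
  unfolding extreme_point_of_def
proof (intro conjI jP ballI notI)
  fix a b assume a: "a \<in> polyh S" and b: "b \<in> polyh S" and j: "j \<in> open_segment a b"
  then obtain u where ab: "a \<noteq> b" and u: "0 < u" "u < 1" and jeq: "j = (1 - u) *\<^sub>R a + u *\<^sub>R b"
    by (auto simp: in_segment)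
  have "\<forall>p\<in>S. fst p \<bullet> j = snd p \<longrightarrow> fst p \<bullet> (a - b) = 0"
  proof (intro ballI impI)
    fix p assume p: "p \<in> S" and act: "fst p \<bullet> j = snd p"
    have "(1 - u) * (fst p \<bullet> a) + u * (fst p \<bullet> b) = snd p"
      using act jeq by (simp add: inner_add_right)
    moreover have "fst p \<bullet> a \<le> snd p" "fst p \<bullet> b \<le> snd p" using a b p by (auto simp: polyh_def)
    ultimately have "fst p \<bullet> a = snd p \<and> fst p \<bullet> b = snd p" using conv_eq u by blast
    thus "fst p \<bullet> (a - b) = 0" by (simp add: inner_diff_right)
  qed
  hence "a - b = 0" using rk by blast
  thus False using ab by simp
qed

lemma min_at_extreme:
  fixes S :: "('a::euclidean_space \<times> real) set"
  assumes fin: "finite S"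
    and noline: "\<And>z d. (\<forall>t. z + t *\<^sub>R d \<in> polyh S) \<Longrightarrow> d = 0"
    and cpos: "\<And>d. (\<forall>p\<in>S. fst p \<bullet> d \<le> 0) \<Longrightarrow> c \<bullet> d \<ge> 0"
    and q: "q \<in> polyh S"
  shows "\<exists>j. j extreme_point_of polyh S \<and> c \<bullet> j \<le> c \<bullet> q"
proof -
  have "\<exists>j\<in>polyh S. c \<bullet> j \<le> c \<bullet> q \<and>
            (\<forall>e. (\<forall>p\<in>S. fst p \<bullet> j = snd p \<longrightarrow> fst p \<bullet> e = 0) \<longrightarrow> e = 0)"
    apply (rule vertex_exists[OF fin])
    using noline cpos q by blast+
  then show ?thesis using rank_extreme by blast
qed

lemma rays_pos:
  fixes S :: "('a::euclidean_space \<times> real) set"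
  assumes fin: "finite S" and z0: "z0 \<in> polyh S"
    and noline: "\<And>z d. (\<forall>t. z + t *\<^sub>R d \<in> polyh S) \<Longrightarrow> d = 0"
    and rays: "\<And>r. r \<in> extreme_rays (polyh S) \<Longrightarrow> c \<bullet> r \<ge> 0"
    and d0C: "\<forall>p\<in>S. fst p \<bullet> d0 \<le> 0"
  shows "c \<bullet> d0 \<ge> 0"
proof (rule ccontr)
  assume "\<not> c \<bullet> d0 \<ge> 0"
  hence cd0: "c \<bullet> d0 < 0" by simp
  define C where "C = {d. \<forall>p\<in>S. fst p \<bullet> d \<le> 0}"
  have recC: "recession_cone (polyh S) = C" unfolding C_def by (rule rec_char[OF z0])
  have Cline: "d = 0" if "d \<in> C" "-d \<in> C" for d
  proof -
    have "\<forall>p\<in>S. fst p \<bullet> d = 0"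
    proof
      fix p assume "p \<in> S"
      hence "fst p \<bullet> d \<le> 0" "fst p \<bullet> (-d) \<le> 0" using that unfolding C_def by blast+
      thus "fst p \<bullet> d = 0" by simp
    qed
    hence "\<forall>t. z0 + t *\<^sub>R d \<in> polyh S" using z0 by (auto simp: polyh_def inner_add_right)
    thus "d = 0" by (rule noline)
  qed
  have Cscale: "r *\<^sub>R d \<in> C" if "d \<in> C" "r \<ge> 0" for d r
    using that unfolding C_def by (auto simp: mult_nonneg_nonpos)
  define S' where "S' = (\<lambda>p. (fst p, 0::real)) ` S \<union> {(c, -1), (-c, 1)}"
  have finS': "finite S'" using fin by (simp add: S'_def)
  have S'char: "z \<in> polyh S' \<longleftrightarrow> z \<in> C \<and> c \<bullet> z = -1" for z
    unfolding polyh_def S'_def C_def by auto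
  define d0' where "d0' = (1 / (-(c \<bullet> d0))) *\<^sub>R d0"
  have "d0 \<in> C" using d0C by (simp add: C_def)
  hence "d0' \<in> C" unfolding d0'_def using cd0 by (intro Cscale) auto
  moreover have "c \<bullet> d0' = -1" using cd0 by (simp add: d0'_def)
  ultimately have d0'P: "d0' \<in> polyh S'" using S'char by blast
  have noline': "d = 0" if "\<forall>t. z + t *\<^sub>R d \<in> polyh S'" for z d
  proof -
    have "\<forall>p\<in>S. fst p \<bullet> d = 0"
    proof
      fix p assume p: "p \<in> S"
      have "\<forall>t. fst p \<bullet> z + t * (fst p \<bullet> d) \<le> 0"
      proof
        fix t
        have "z + t *\<^sub>R d \<in> C" using that S'char by blast
        thus "fst p \<bullet> z + t * (fst p \<bullet> d) \<le> 0" using p by (simp add: C_def inner_add_right)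
      qed
      thus "fst p \<bullet> d = 0" by (rule slope_zero)
    qed
    hence "d \<in> C" "-d \<in> C" by (auto simp: C_def)
    thus ?thesis by (rule Cline)
  qed
  have "\<exists>j\<in>polyh S'. (0::'a) \<bullet> j \<le> 0 \<bullet> d0' \<and>
            (\<forall>e. (\<forall>p\<in>S'. fst p \<bullet> j = snd p \<longrightarrow> fst p \<bullet> e = 0) \<longrightarrow> e = 0)"
    apply (rule vertex_exists[OF finS'])
      apply (rule noline', blast)
     apply simp
    by (rule d0'P)
  then obtain j where jP: "j \<in> polyh S'"
    and rk: "\<forall>e. (\<forall>p\<in>S'. fst p \<bullet> j = snd p \<longrightarrow> fst p \<bullet> e = 0) \<longrightarrow> e = 0" by blast
  have jC: "j \<in> C" and cj: "c \<bullet> j = -1" using jP S'char by auto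
  have j0: "j \<noteq> 0" using cj by auto
  define R where "R = {t *\<^sub>R j | t::real. t \<ge> 0}"
  have key: "a \<in> R" if aC: "a \<in> C" and aact: "\<forall>p\<in>S. fst p \<bullet> j = 0 \<longrightarrow> fst p \<bullet> a = 0" for a
  proof -
    define e where "e = a + (c \<bullet> a) *\<^sub>R j"
    have "\<forall>p\<in>S'. fst p \<bullet> j = snd p \<longrightarrow> fst p \<bullet> e = 0"
    proof (intro ballI impI)
      fix p assume p: "p \<in> S'" and act: "fst p \<bullet> j = snd p"
      show "fst p \<bullet> e = 0"
      proof (cases "p \<in> (\<lambda>p. (fst p, 0::real)) ` S")
        case True
        then obtain p' where p': "p' \<in> S" "p = (fst p', 0)" by auto
        hence "fst p' \<bullet> j = 0" using act by simp
        hence "fst p' \<bullet> a = 0" using aact p' by blast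
        thus ?thesis using p' \<open>fst p' \<bullet> j = 0\<close> by (simp add: e_def inner_add_right)
      next
        case False
        hence "p = (c, -1) \<or> p = (-c, 1)" using p by (auto simp: S'_def)
        thus ?thesis using cj by (auto simp: e_def inner_add_right)
      qed
    qed
    hence "e = 0" using rk by blast
    hence aeq: "a = (- (c \<bullet> a)) *\<^sub>R j" by (simp add: e_def add_eq_0_iff)
    show ?thesis
    proof (cases "c \<bullet> a \<le> 0")
      case True
      hence "-(c \<bullet> a) \<ge> 0" by simp
      thus ?thesis unfolding R_def using aeq by blast
    next
      case False
      have "(1 / (c \<bullet> a)) *\<^sub>R a \<in> C" using aC False by (intro Cscale) auto
      moreover have "(1 / (c \<bullet> a)) *\<^sub>R a = - j"
        using False by (subst aeq) simp
      ultimately have "-j \<in> C" by simp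
      hence "j = 0" using Cline jC by blast
      thus ?thesis using j0 by simp
    qed
  qed
  have face: "R face_of C"
    unfolding face_of_def
  proof (intro conjI ballI impI)
    show "R \<subseteq> C" using jC Cscale unfolding R_def by auto
    show "convex R" unfolding convex_def R_def
    proof (clarify)
      fix u v :: real and t1 t2 :: real
      assume "0 \<le> u" "0 \<le> v" "u + v = 1" "0 \<le> t1" "0 \<le> t2"
      hence "u * t1 + v * t2 \<ge> 0" by simp
      moreover have "u *\<^sub>R t1 *\<^sub>R j + v *\<^sub>R t2 *\<^sub>R j = (u * t1 + v * t2) *\<^sub>R j"
        by (simp add: algebra_simps)
      ultimately show "\<exists>t. u *\<^sub>R t1 *\<^sub>R j + v *\<^sub>R t2 *\<^sub>R j = t *\<^sub>R j \<and> 0 \<le> t" by blast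
    qed
    fix a b x assume aC: "a \<in> C" and bC: "b \<in> C" and xR: "x \<in> R" and xs: "x \<in> open_segment a b"
    obtain s where xj: "x = s *\<^sub>R j" using xR R_def by auto
    obtain u where u: "0 < u" "u < 1" and xeq: "x = (1 - u) *\<^sub>R a + u *\<^sub>R b"
      using xs by (auto simp: in_segment)
    have "\<forall>p\<in>S. fst p \<bullet> j = 0 \<longrightarrow> fst p \<bullet> a = 0 \<and> fst p \<bullet> b = 0"
    proof (intro ballI impI)
      fix p assume p: "p \<in> S" and act: "fst p \<bullet> j = 0"
      have "fst p \<bullet> x = 0" using xj act by simp
      moreover have "fst p \<bullet> x = (1 - u) * (fst p \<bullet> a) + u * (fst p \<bullet> b)"
        using xeq by (simp add: inner_add_right)
      ultimately have "(1 - u) * (fst p \<bullet> a) + u * (fst p \<bullet> b) = 0" by simp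
      moreover have "fst p \<bullet> a \<le> 0" "fst p \<bullet> b \<le> 0" using aC bC p by (auto simp: C_def)
      ultimately show "fst p \<bullet> a = 0 \<and> fst p \<bullet> b = 0" using conv_eq u by blast
    qed
    thus "a \<in> R" "b \<in> R" using key aC bC by blast+
  qed
  have "j \<in> extreme_rays (polyh S)"
    unfolding extreme_rays_def extreme_ray_of_def recC using jC j0 face R_def by auto
  hence "c \<bullet> j \<ge> 0" by (rule rays)
  thus False using cj by simp
qed




lemma sum_UNIV_plus:
  "(\<Sum>x\<in>(UNIV::('a::finite + 'b::finite) set). f x) = (\<Sum>x\<in>UNIV. f (Inl x)) + (\<Sum>x\<in>UNIV. f (Inr x))"
proof -
  have "(\<Sum>x\<in>(UNIV::('a + 'b) set). f x) = (\<Sum>x\<in>Inl ` UNIV \<union> Inr ` UNIV. f x)"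
    by (simp add: UNIV_sum[symmetric])
  also have "\<dots> = (\<Sum>x\<in>Inl ` (UNIV::'a set). f x) + (\<Sum>x\<in>Inr ` (UNIV::'b set). f x)"
    by (rule sum.union_disjoint) auto
  also have "\<dots> = (\<Sum>x\<in>UNIV. f (Inl x)) + (\<Sum>x\<in>UNIV. f (Inr x))"
    by (simp add: sum.reindex)
  finally show ?thesis .
qed

lemma farkas:
  fixes m :: "'r::finite \<Rightarrow> 'c::finite \<Rightarrow> real" and h :: "'r \<Rightarrow> real"
  assumes H: "\<And>pi. (\<forall>r. pi r \<ge> 0) \<Longrightarrow> (\<forall>c. (\<Sum>r\<in>UNIV. m r c * pi r) \<le> 0) \<Longrightarrow> (\<Sum>r\<in>UNIV. pi r * h r) \<le> 0"
  shows "\<exists>z. (\<forall>c. z c \<ge> 0) \<and> (\<forall>r. (\<Sum>c\<in>UNIV. m r c * z c) \<ge> h r)"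
proof -
  define col :: "'c + 'r \<Rightarrow> real^'r" where
    "col j = (case j of Inl c \<Rightarrow> (\<chi> r. m r c) | Inr r0 \<Rightarrow> - axis r0 1)" for j
  define hv :: "real^'r" where "hv = (\<chi> r. h r)"
  define K where "K = {\<Sum>j\<in>UNIV. l j *\<^sub>R col j | l. \<forall>j. l j \<ge> 0}"
  define HH where "HH = convex_cone hull (range col)"
  have inK: "(\<Sum>j\<in>UNIV. l j *\<^sub>R col j) \<in> K" if "\<forall>j. l j \<ge> 0" for l
    unfolding K_def using that by blast
  have rK: "range col \<subseteq> K"
  proof
    fix x assume "x \<in> range col"
    then obtain j0 where x: "x = col j0" by auto
    have "(\<Sum>j\<in>UNIV. (if j = j0 then 1 else 0) *\<^sub>R col j) = col j0"
      by (simp add: if_distrib[of "\<lambda>t. t *\<^sub>R _"] cong: if_cong)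
    moreover have "\<forall>j. (if j = j0 then 1 else (0::real)) \<ge> 0" by simp
    ultimately show "x \<in> K" unfolding x using inK[of "\<lambda>j. if j = j0 then 1 else 0"] by simp
  qed
  have cK: "convex_cone K"
    unfolding convex_cone_def
  proof (intro conjI)
    have "(\<Sum>j\<in>UNIV. (0::real) *\<^sub>R col j) \<in> K" using inK[of "\<lambda>j. 0"] by simp
    thus "K \<noteq> {}" by blast
    show "convex K" unfolding convex_def
    proof (intro ballI allI impI)
      fix x y and u v :: real assume x: "x \<in> K" and y: "y \<in> K" and uv: "0 \<le> u" "0 \<le> v" "u + v = 1"
      obtain l1 where l1: "x = (\<Sum>j\<in>UNIV. l1 j *\<^sub>R col j)" "\<forall>j. l1 j \<ge> 0" using x K_def by auto
      obtain l2 where l2: "y = (\<Sum>j\<in>UNIV. l2 j *\<^sub>R col j)" "\<forall>j. l2 j \<ge> 0" using y K_def by auto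
      have "u *\<^sub>R x + v *\<^sub>R y = (\<Sum>j\<in>UNIV. (u * l1 j + v * l2 j) *\<^sub>R col j)"
        by (simp add: l1 l2 scaleR_sum_right sum.distrib scaleR_add_left)
      moreover have "\<forall>j. u * l1 j + v * l2 j \<ge> 0" using l1 l2 uv by simp
      ultimately show "u *\<^sub>R x + v *\<^sub>R y \<in> K" using inK[of "\<lambda>j. u * l1 j + v * l2 j"] by simp
    qed
    show "conic K" unfolding conic_def
    proof (intro allI impI)
      fix x and c :: real assume x: "x \<in> K" and c: "0 \<le> c"
      obtain l1 where l1: "x = (\<Sum>j\<in>UNIV. l1 j *\<^sub>R col j)" "\<forall>j. l1 j \<ge> 0" using x K_def by auto
      have "c *\<^sub>R x = (\<Sum>j\<in>UNIV. (c * l1 j) *\<^sub>R col j)"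
        by (simp add: l1 scaleR_sum_right)
      moreover have "\<forall>j. c * l1 j \<ge> 0" using l1 c by simp
      ultimately show "c *\<^sub>R x \<in> K" using inK[of "\<lambda>j. c * l1 j"] by simp
    qed
  qed
  have HK: "HH \<subseteq> K" unfolding HH_def using rK cK by (rule hull_minimal)
  show ?thesis
  proof (cases "hv \<in> HH")
    case True
    then obtain l where l: "hv = (\<Sum>j\<in>UNIV. l j *\<^sub>R col j)" "\<forall>j. l j \<ge> 0" using HK K_def by auto
    define z where "z c = l (Inl c)" for c
    have "\<forall>r. (\<Sum>c\<in>UNIV. m r c * z c) \<ge> h r"
    proof
      fix r
      have "h r = hv $ r" by (simp add: hv_def)
      also have "\<dots> = (\<Sum>j\<in>UNIV. l j * (col j $ r))" by (simp add: l)
      also have "\<dots> = (\<Sum>c\<in>UNIV. l (Inl c) * m r c) + (\<Sum>r0\<in>UNIV. l (Inr r0) * (- (axis r0 1 $ r)))"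
        by (simp add: sum_UNIV_plus col_def)
      also have "(\<Sum>r0\<in>UNIV. l (Inr r0) * (- (axis r0 1 $ r))) = - l (Inr r)"
        by (simp add: axis_def if_distrib[of "\<lambda>t. l (Inr _) * t"] sum_negf cong: if_cong)
      finally have "h r = (\<Sum>c\<in>UNIV. m r c * z c) - l (Inr r)" by (simp add: z_def mult.commute)
      thus "(\<Sum>c\<in>UNIV. m r c * z c) \<ge> h r" using l(2)[rule_format, of "Inr r"] by linarith
    qed
    thus ?thesis using l(2) z_def by auto
  next
    case False
    have cvx: "convex HH" unfolding HH_def by (rule convex_convex_cone_hull)
    have cl: "closed HH" unfolding HH_def by (rule closed_convex_cone_hull) simp
    obtain a b where ab: "a \<bullet> hv < b" "\<forall>x\<in>HH. b < a \<bullet> x"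
      using separating_hyperplane_closed_point[OF cvx cl False] by blast
    have "b < 0" using ab(2) convex_cone_hull_contains_0 unfolding HH_def by fastforce
    have acol: "a \<bullet> col j \<ge> 0" for j
    proof (rule ccontr)
      assume "\<not> a \<bullet> col j \<ge> 0"
      hence neg: "a \<bullet> col j < 0" by simp
      define t where "t = b / (a \<bullet> col j)"
      have "t \<ge> 0" using neg \<open>b < 0\<close> by (simp add: t_def divide_nonpos_neg)
      hence "t *\<^sub>R col j \<in> HH" unfolding HH_def by (intro convex_cone_hull_mul hull_inc) auto
      hence "b < t * (a \<bullet> col j)" using ab(2) by auto
      moreover have "t * (a \<bullet> col j) = b" using neg by (simp add: t_def)
      ultimately show False by simp
    qed
    define pi where "pi r = - (a $ r)" for r
    have p1: "\<forall>r. pi r \<ge> 0"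
    proof
      fix r
      have "a \<bullet> col (Inr r) = - (a $ r)" by (simp add: col_def inner_axis)
      thus "pi r \<ge> 0" using acol[of "Inr r"] by (simp add: pi_def)
    qed
    have p2: "\<forall>c. (\<Sum>r\<in>UNIV. m r c * pi r) \<le> 0"
    proof
      fix c
      have "a \<bullet> col (Inl c) = (\<Sum>r\<in>UNIV. a $ r * m r c)" by (simp add: col_def inner_vec_def)
      hence "(\<Sum>r\<in>UNIV. m r c * pi r) = - (a \<bullet> col (Inl c))"
        by (simp add: pi_def sum_negf mult.commute)
      thus "(\<Sum>r\<in>UNIV. m r c * pi r) \<le> 0" using acol[of "Inl c"] by simp
    qed
    have "(\<Sum>r\<in>UNIV. pi r * h r) = - (a \<bullet> hv)" by (simp add: pi_def hv_def inner_vec_def sum_negf)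
    hence "(\<Sum>r\<in>UNIV. pi r * h r) > 0" using ab(1) \<open>b < 0\<close> by simp
    thus ?thesis using H[OF p1 p2] by simp
  qed
qed




declare transpose_matrix_vector[simp del]

lemma ball_range: "(\<forall>x\<in>range f. P x) \<longleftrightarrow> (\<forall>i. P (f i))" by auto

lemma aux_le1: "(a - c \<le> - (b::real)) \<longleftrightarrow> (b \<le> c - a)" by linarith
lemma aux_le2: "(a - c \<le> (0::real)) \<longleftrightarrow> (a \<le> c)" by linarith

lemma aux_le3: "(a + (c - dd * w) \<le> (e::real)) \<longleftrightarrow> (a + c \<le> w * dd + e)" by (simp add: algebra_simps)
lemma aux_le4: "(a + (c - dd * w) \<le> (0::real)) \<longleftrightarrow> (a + c \<le> w * dd)" by (simp add: algebra_simps)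

lemma tr_dot: "((M::real^'n^'m) *v y) \<bullet> u = y \<bullet> (transpose M *v u)"
  unfolding inner_vec_def matrix_vector_mult_def transpose_def
  apply (simp add: sum_distrib_left sum_distrib_right)
  apply (subst sum.swap)
  apply (simp add: mult_ac)
  done

lemma dot_mono: "0 \<le> u \<Longrightarrow> x \<le> y \<Longrightarrow> u \<bullet> x \<le> u \<bullet> (y::real^'n)"
  unfolding inner_vec_def less_eq_vec_def
  by (auto intro!: sum_mono mult_left_mono)

lemma dot_nonneg: "0 \<le> u \<Longrightarrow> 0 \<le> x \<Longrightarrow> 0 \<le> u \<bullet> (x::real^'n)"
  using dot_mono[of u 0 x] by simp

definition S1 :: "real^'n2^'m \<Rightarrow> real^'m \<Rightarrow> real^'m^'q \<Rightarrow> real^'r^'q \<Rightarrow>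
    (((real^'n2) \<times> (real^'q)) \<times> real) set" where
  "S1 B b Kpsi Ks = range (\<lambda>i. ((- axis i 1, 0), 0)) \<union> range (\<lambda>i. ((0, - axis i 1), 0))
     \<union> range (\<lambda>i. ((- (B $ i), transpose Kpsi $ i), - (b $ i))) \<union> range (\<lambda>i. ((0, transpose Ks $ i), 1))"

definition S2 :: "real^'n2^'m \<Rightarrow> real^'n2 \<Rightarrow> real^'n2^'p \<Rightarrow> real^'n2 \<Rightarrow>
    (((real^'m) \<times> (real^'p) \<times> real) \<times> real) set" where
  "S2 B d Gy cy = range (\<lambda>i. ((- axis i 1, 0, 0), 0)) \<union> range (\<lambda>i. ((0, - axis i 1, 0), 0))
     \<union> {((0, 0, -1), 0)} \<union> range (\<lambda>i. ((transpose B $ i, transpose Gy $ i, - (d $ i)), cy $ i))"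

lemma finite_S1: "finite (S1 B b Kpsi Ks)" by (simp add: S1_def)
lemma finite_S2: "finite (S2 B d Gy cy)" by (simp add: S2_def)

lemma P1_eq: "P1set B b Kpsi Ks = polyh (S1 B b Kpsi Ks)"
proof (rule set_eqI, clarify)
  fix y v
  show "((y, v) \<in> P1set B b Kpsi Ks) = ((y, v) \<in> polyh (S1 B b Kpsi Ks))"
    unfolding P1set_def polyh_def S1_def
    by (auto simp: less_eq_vec_def matrix_vector_mul_component inner_axis' inner_minus_left ball_Un ball_range aux_le1)
qed

lemma C1_eq: "(\<forall>p\<in>S1 B b Kpsi Ks. fst p \<bullet> (y, v) \<le> 0) \<longleftrightarrow>
    (0 \<le> y \<and> 0 \<le> v \<and> 0 \<le> B *v y - transpose Kpsi *v v \<and> transpose Ks *v v \<le> 0)"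
  unfolding S1_def
  by (auto simp: less_eq_vec_def matrix_vector_mul_component inner_axis' inner_minus_left ball_Un ball_range aux_le1)

lemma P2_eq: "P2set B d Gy cy = polyh (S2 B d Gy cy)"
proof (rule set_eqI, clarify)
  fix psi uy w
  show "((psi, uy, w) \<in> P2set B d Gy cy) = ((psi, uy, w) \<in> polyh (S2 B d Gy cy))"
    unfolding P2set_def polyh_def S2_def
    by (auto simp: less_eq_vec_def matrix_vector_mul_component inner_axis' inner_minus_left ball_Un ball_range aux_le3 aux_le4)
qed

lemma C2_eq: "(\<forall>p\<in>S2 B d Gy cy. fst p \<bullet> (psi, uy, w) \<le> 0) \<longleftrightarrow>
    (0 \<le> psi \<and> 0 \<le> uy \<and> 0 \<le> w \<and> transpose B *v psi + transpose Gy *v uy \<le> w *\<^sub>R d)"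
  unfolding S2_def
  by (auto simp: less_eq_vec_def matrix_vector_mul_component inner_axis' inner_minus_left ball_Un ball_range aux_le3 aux_le4)

lemma vec_noline:
  fixes z d :: "real^'n"
  assumes "\<forall>t. 0 \<le> z + t *\<^sub>R d" shows "d = 0"
proof -
  have "d $ i = 0" for i
  proof -
    have "\<forall>t. - (z $ i) + t * (- (d $ i)) \<le> 0"
    proof
      fix t
      have "0 \<le> (z + t *\<^sub>R d) $ i" using assms unfolding less_eq_vec_def by simp
      thus "- (z $ i) + t * (- (d $ i)) \<le> 0" by simp
    qed
    hence "- (d $ i) = 0" by (rule slope_zero)
    thus ?thesis by simp
  qed
  thus ?thesis by (simp add: vec_eq_iff)
qed

lemma P1_noline:
  assumes "\<forall>t. z + t *\<^sub>R d \<in> polyh (S1 B b Kpsi Ks)" shows "d = 0"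
proof -
  obtain zy zv dy dv where zd: "z = (zy, zv)" "d = (dy, dv)" by (cases z, cases d) auto
  have m: "(zy + t *\<^sub>R dy, zv + t *\<^sub>R dv) \<in> P1set B b Kpsi Ks" for t
    using assms zd unfolding P1_eq[symmetric] by simp
  have "\<forall>t. 0 \<le> zy + t *\<^sub>R dy" "\<forall>t. 0 \<le> zv + t *\<^sub>R dv"
    using m unfolding P1set_def by blast+
  hence "dy = 0" "dv = 0" using vec_noline by blast+
  thus ?thesis using zd by (simp add: zero_prod_def)
qed

lemma P2_noline:
  assumes "\<forall>t. z + t *\<^sub>R d \<in> polyh (S2 B dd Gy cy)" shows "d = 0"
proof -
  obtain zp zu zw dp du dw where zd: "z = (zp, zu, zw)" "d = (dp, du, dw)" by (cases z, cases d) auto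
  have m: "(zp + t *\<^sub>R dp, zu + t *\<^sub>R du, zw + t * dw) \<in> P2set B dd Gy cy" for t
    using assms zd unfolding P2_eq[symmetric] by simp
  have "\<forall>t. 0 \<le> zp + t *\<^sub>R dp" "\<forall>t. 0 \<le> zu + t *\<^sub>R du" "\<forall>t. 0 \<le> zw + t * dw"
    using m unfolding P2set_def by blast+
  moreover have "\<forall>t. - zw + t * (- dw) \<le> 0" 
  proof
    fix t have "0 \<le> zw + t * dw" using calculation(3) by blast
    thus "- zw + t * (- dw) \<le> 0" by linarith
  qed
  ultimately have "dp = 0" "du = 0" "- dw = 0" using vec_noline slope_zero by blast+
  thus ?thesis using zd by (simp add: zero_prod_def)
qed




lemma vadd_mono: "(x::real^'n) \<le> y \<Longrightarrow> x' \<le> y' \<Longrightarrow> x + x' \<le> y + y'"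
  by (simp add: less_eq_vec_def add_mono)
lemma vscale_mono: "(x::real^'n) \<le> y \<Longrightarrow> 0 \<le> c \<Longrightarrow> c *\<^sub>R x \<le> c *\<^sub>R y"
  by (simp add: less_eq_vec_def mult_left_mono)
lemma vnn_add: "0 \<le> (x::real^'n) \<Longrightarrow> 0 \<le> y \<Longrightarrow> 0 \<le> x + y"
  using vadd_mono[of 0 x 0 y] by simp
lemma vnn_scale: "0 \<le> (x::real^'n) \<Longrightarrow> 0 \<le> c \<Longrightarrow> 0 \<le> c *\<^sub>R x"
  using vscale_mono[of 0 x c] by simp
lemma vle_lin: "(\<And>i. a$i \<le> b$i \<Longrightarrow> c$i \<le> e$i) \<Longrightarrow> a \<le> b \<Longrightarrow> c \<le> (e::real^'n)"
  by (simp add: less_eq_vec_def)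

locale lpdata =
  fixes A :: "real^'n1^'m" and B :: "real^'n2^'m" and b :: "real^'m"
    and cy :: "real^'n2" and d :: "real^'n2"
    and Gxy :: "real^'n1^'p" and Gy :: "real^'n2^'p" and hy :: "real^'p"
    and Kpsi :: "real^'m^'q" and Ks :: "real^'r^'q" and Kx :: "real^'n1^'q" and k :: "real^'q"
begin

definition dfeas :: "real \<Rightarrow> real^'p \<Rightarrow> real^'m \<Rightarrow> real \<Rightarrow> real^'n2 \<Rightarrow> real^'q \<Rightarrow> bool" where
  "dfeas mu u al w be v \<longleftrightarrow> 0 \<le> u \<and> 0 \<le> al \<and> 0 \<le> w \<and> 0 \<le> be \<and> 0 \<le> v \<and>
     transpose Gy *v u + transpose B *v al - w *\<^sub>R d \<le> mu *\<^sub>R cy \<and>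
     w *\<^sub>R b \<le> B *v be - transpose Kpsi *v v \<and> transpose Ks *v v \<le> w *\<^sub>R 1"

definition dobj :: "real^'n1 \<Rightarrow> real^'p \<Rightarrow> real^'m \<Rightarrow> real^'n2 \<Rightarrow> real^'q \<Rightarrow> real" where
  "dobj x u al be v = u \<bullet> (hy - Gxy *v x) + al \<bullet> (b - A *v x) - be \<bullet> d + v \<bullet> (k + Kx *v x)"

lemma weak_duality:
  assumes feas: "(y, psi, s) \<in> inner_feasible A B b d Gxy Gy hy Kpsi Ks Kx k x"
    and df: "dfeas 1 u al w be v"
  shows "dobj x u al be v \<le> cy \<bullet> y"
proof -
  from feas have y0: "0 \<le> y" and psi0: "0 \<le> psi" and s0: "0 \<le> s"
    and F1: "hy - Gxy *v x \<le> Gy *v y" and F2: "b - A *v x \<le> B *v y"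
    and F3: "- d \<le> - (transpose B *v psi)" and F4: "0 \<le> - (d \<bullet> y) + psi \<bullet> b - s \<bullet> 1"
    and F5: "k + Kx *v x \<le> Kpsi *v psi + Ks *v s"
    unfolding inner_feasible_def by auto
  from df have u0: "0 \<le> u" and al0: "0 \<le> al" and w0: "0 \<le> w" and be0: "0 \<le> be" and v0: "0 \<le> v"
    and D1: "transpose Gy *v u + transpose B *v al - w *\<^sub>R d \<le> 1 *\<^sub>R cy"
    and D2: "w *\<^sub>R b \<le> B *v be - transpose Kpsi *v v"
    and D3: "transpose Ks *v v \<le> w *\<^sub>R 1"
    unfolding dfeas_def by auto
  have F3': "transpose B *v psi \<le> d" using F3 by (simp add: less_eq_vec_def)
  have s1: "y \<bullet> (transpose Gy *v u + transpose B *v al - w *\<^sub>R d) \<le> y \<bullet> cy"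
    using dot_mono[OF y0 D1] by simp
  have e1: "y \<bullet> (transpose Gy *v u + transpose B *v al - w *\<^sub>R d)
      = u \<bullet> (Gy *v y) + al \<bullet> (B *v y) - w * (d \<bullet> y)"
    by (simp add: inner_add_right inner_diff_right tr_dot[symmetric] inner_commute)
  have s2: "u \<bullet> (hy - Gxy *v x) \<le> u \<bullet> (Gy *v y)" by (rule dot_mono[OF u0 F1])
  have s3: "al \<bullet> (b - A *v x) \<le> al \<bullet> (B *v y)" by (rule dot_mono[OF al0 F2])
  have s4: "w * (d \<bullet> y) \<le> w * (psi \<bullet> b - s \<bullet> 1)" using F4 w0 by (intro mult_left_mono) auto
  have s5: "psi \<bullet> (w *\<^sub>R b) \<le> psi \<bullet> (B *v be - transpose Kpsi *v v)" by (rule dot_mono[OF psi0 D2])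
  have e5: "psi \<bullet> (B *v be - transpose Kpsi *v v) = be \<bullet> (transpose B *v psi) - v \<bullet> (Kpsi *v psi)"
    by (simp add: inner_diff_right inner_commute[of psi] tr_dot)
  have s6: "s \<bullet> (transpose Ks *v v) \<le> s \<bullet> (w *\<^sub>R 1)" by (rule dot_mono[OF s0 D3])
  have e6: "s \<bullet> (transpose Ks *v v) = v \<bullet> (Ks *v s)"
    by (simp add: inner_commute[of s] tr_dot)
  have s7: "be \<bullet> (transpose B *v psi) \<le> be \<bullet> d" by (rule dot_mono[OF be0 F3'])
  have s8: "v \<bullet> (k + Kx *v x) \<le> v \<bullet> (Kpsi *v psi + Ks *v s)" by (rule dot_mono[OF v0 F5])
  have e8: "v \<bullet> (Kpsi *v psi + Ks *v s) = v \<bullet> (Kpsi *v psi) + v \<bullet> (Ks *v s)"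
    by (simp add: inner_add_right)
  have "psi \<bullet> (w *\<^sub>R b) = w * (psi \<bullet> b)" "s \<bullet> (w *\<^sub>R 1) = w * (s \<bullet> 1)" by simp_all
  moreover have "w * (psi \<bullet> b - s \<bullet> 1) = w * (psi \<bullet> b) - w * (s \<bullet> 1)" by (simp add: algebra_simps)
  ultimately show ?thesis unfolding dobj_def
    using s1 e1 s2 s3 s4 s5 e5 s6 e6 s7 s8 e8 by (simp add: inner_commute[of cy])
qed

lemma dfeas_add:
  assumes "dfeas m1 u1 a1 w1 b1 v1" "dfeas m2 u2 a2 w2 b2 v2"
  shows "dfeas (m1 + m2) (u1 + u2) (a1 + a2) (w1 + w2) (b1 + b2) (v1 + v2)"
proof -
  have e1: "transpose Gy *v (u1 + u2) + transpose B *v (a1 + a2) - (w1 + w2) *\<^sub>R d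
     = (transpose Gy *v u1 + transpose B *v a1 - w1 *\<^sub>R d) + (transpose Gy *v u2 + transpose B *v a2 - w2 *\<^sub>R d)"
    by (simp add: algebra_simps)
  have e2: "(m1 + m2) *\<^sub>R cy = m1 *\<^sub>R cy + m2 *\<^sub>R cy" by (simp add: algebra_simps)
  have e3: "(w1 + w2) *\<^sub>R b = w1 *\<^sub>R b + w2 *\<^sub>R b" by (simp add: algebra_simps)
  have e4: "B *v (b1 + b2) - transpose Kpsi *v (v1 + v2) = (B *v b1 - transpose Kpsi *v v1) + (B *v b2 - transpose Kpsi *v v2)"
    by (simp add: algebra_simps)
  have e5: "transpose Ks *v (v1 + v2) = transpose Ks *v v1 + transpose Ks *v v2" by (simp add: algebra_simps)
  have e6: "(w1 + w2) *\<^sub>R (1::real^'r) = w1 *\<^sub>R 1 + w2 *\<^sub>R 1" by (simp add: algebra_simps)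
  show ?thesis using assms unfolding dfeas_def e1 e2 e3 e4 e5 e6
    by (auto intro: vadd_mono vnn_add)
qed

lemma dfeas_scale:
  assumes "dfeas m u a w be v" "0 \<le> c"
  shows "dfeas (c * m) (c *\<^sub>R u) (c *\<^sub>R a) (c * w) (c *\<^sub>R be) (c *\<^sub>R v)"
proof -
  have e1: "transpose Gy *v (c *\<^sub>R u) + transpose B *v (c *\<^sub>R a) - (c * w) *\<^sub>R d
     = c *\<^sub>R (transpose Gy *v u + transpose B *v a - w *\<^sub>R d)"
    by (simp add: algebra_simps)
  have e2: "(c * m) *\<^sub>R cy = c *\<^sub>R (m *\<^sub>R cy)" by simp
  have e3: "(c * w) *\<^sub>R b = c *\<^sub>R (w *\<^sub>R b)" by simp
  have e4: "B *v (c *\<^sub>R be) - transpose Kpsi *v (c *\<^sub>R v) = c *\<^sub>R (B *v be - transpose Kpsi *v v)"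
    by (simp add: algebra_simps)
  have e5: "transpose Ks *v (c *\<^sub>R v) = c *\<^sub>R (transpose Ks *v v)" by (simp add: algebra_simps)
  have e6: "(c * w) *\<^sub>R (1::real^'r) = c *\<^sub>R (w *\<^sub>R 1)" by simp
  from assms(1) have nn: "0 \<le> u" "0 \<le> a" "0 \<le> w" "0 \<le> be" "0 \<le> v"
    and D1: "transpose Gy *v u + transpose B *v a - w *\<^sub>R d \<le> m *\<^sub>R cy"
    and D2: "w *\<^sub>R b \<le> B *v be - transpose Kpsi *v v"
    and D3: "transpose Ks *v v \<le> w *\<^sub>R 1" unfolding dfeas_def by auto
  have D1': "transpose Gy *v (c *\<^sub>R u) + transpose B *v (c *\<^sub>R a) - (c * w) *\<^sub>R d \<le> (c * m) *\<^sub>R cy"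
    unfolding e1 e2 by (rule vscale_mono[OF D1 assms(2)])
  have D2': "(c * w) *\<^sub>R b \<le> B *v (c *\<^sub>R be) - transpose Kpsi *v (c *\<^sub>R v)"
    unfolding e3 e4 by (rule vscale_mono[OF D2 assms(2)])
  have D3': "transpose Ks *v (c *\<^sub>R v) \<le> (c * w) *\<^sub>R 1"
    unfolding e5 e6 by (rule vscale_mono[OF D3 assms(2)])
  have "0 \<le> c *\<^sub>R u" "0 \<le> c *\<^sub>R a" "0 \<le> c * w" "0 \<le> c *\<^sub>R be" "0 \<le> c *\<^sub>R v"
    using nn assms(2) vnn_scale by auto
  thus ?thesis unfolding dfeas_def using D1' D2' D3' by blast
qed

lemma dobj_add: "dobj x (u1 + u2) (a1 + a2) (b1 + b2) (v1 + v2) = dobj x u1 a1 b1 v1 + dobj x u2 a2 b2 v2"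
  by (simp add: dobj_def inner_add_left)

lemma dobj_scale: "dobj x (c *\<^sub>R u) (c *\<^sub>R a) (c *\<^sub>R be) (c *\<^sub>R v) = c * dobj x u a be v"
  by (simp add: dobj_def algebra_simps)

lemma PQ_dfeas:
  assumes p: "(ps, uy, w) \<in> P2set B d Gy cy" and q: "(qy, qv) \<in> P1set B b Kpsi Ks"
  shows "dfeas 1 uy ps w (w *\<^sub>R qy) (w *\<^sub>R qv)"
    and "dobj x uy ps (w *\<^sub>R qy) (w *\<^sub>R qv) =
         ps \<bullet> (b - A *v x) + uy \<bullet> (hy - Gxy *v x) - w * (d \<bullet> qy - qv \<bullet> (k + Kx *v x))"
proof -
  from p have ps0: "0 \<le> ps" and u0: "0 \<le> uy" and w0: "0 \<le> w"
    and pc: "transpose B *v ps + transpose Gy *v uy \<le> w *\<^sub>R d + cy" by (auto simp: P2set_def)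
  from q have qy0: "0 \<le> qy" and qv0: "0 \<le> qv" and qc1: "b \<le> B *v qy - transpose Kpsi *v qv"
    and qc2: "transpose Ks *v qv \<le> 1" by (auto simp: P1set_def)
  have D1: "transpose Gy *v uy + transpose B *v ps - w *\<^sub>R d \<le> 1 *\<^sub>R cy"
    by (rule vle_lin[OF _ pc]) (simp add: algebra_simps)
  have D2: "w *\<^sub>R b \<le> B *v (w *\<^sub>R qy) - transpose Kpsi *v (w *\<^sub>R qv)"
    using vscale_mono[OF qc1 w0] by (simp add: algebra_simps)
  have D3: "transpose Ks *v (w *\<^sub>R qv) \<le> w *\<^sub>R 1"
    using vscale_mono[OF qc2 w0] by (simp add: algebra_simps)
  show "dfeas 1 uy ps w (w *\<^sub>R qy) (w *\<^sub>R qv)"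
  proof -
    have "0 \<le> w *\<^sub>R qy" "0 \<le> w *\<^sub>R qv" using vnn_scale qy0 qv0 w0 by auto
    thus ?thesis unfolding dfeas_def using ps0 u0 w0 D1 D2 D3 by blast
  qed
  show "dobj x uy ps (w *\<^sub>R qy) (w *\<^sub>R qv) =
         ps \<bullet> (b - A *v x) + uy \<bullet> (hy - Gxy *v x) - w * (d \<bullet> qy - qv \<bullet> (k + Kx *v x))"
    by (simp add: dobj_def algebra_simps inner_commute[of d])
qed

lemma ray1_dfeas:
  assumes "0 \<le> ry" "0 \<le> rv" "0 \<le> B *v ry - transpose Kpsi *v rv" "transpose Ks *v rv \<le> 0"
  shows "dfeas 0 0 0 0 ry rv" and "dobj x 0 0 ry rv = - (d \<bullet> ry - rv \<bullet> (k + Kx *v x))"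
  using assms by (auto simp: dfeas_def dobj_def inner_commute[of d])

lemma dfeas_P2:
  assumes "dfeas 1 u al w be v" shows "(al, u, w) \<in> P2set B d Gy cy"
proof -
  from assms have "transpose Gy *v u + transpose B *v al - w *\<^sub>R d \<le> 1 *\<^sub>R cy"
    and "0 \<le> u" "0 \<le> al" "0 \<le> w" by (auto simp: dfeas_def)
  moreover have "transpose B *v al + transpose Gy *v u \<le> w *\<^sub>R d + cy"
    by (rule vle_lin[OF _ calculation(1)]) (simp add: algebra_simps)
  ultimately show ?thesis by (auto simp: P2set_def)
qed

lemma dfeas_P1:
  assumes df: "dfeas 1 u al w be v" and w: "w > 0"
  shows "((1 / w) *\<^sub>R be, (1 / w) *\<^sub>R v) \<in> P1set B b Kpsi Ks"
    and "dobj x u al be v = al \<bullet> (b - A *v x) + u \<bullet> (hy - Gxy *v x)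
            - w * (d \<bullet> ((1 / w) *\<^sub>R be) - ((1 / w) *\<^sub>R v) \<bullet> (k + Kx *v x))"
proof -
  from df have be0: "0 \<le> be" and v0: "0 \<le> v" and D2: "w *\<^sub>R b \<le> B *v be - transpose Kpsi *v v"
    and D3: "transpose Ks *v v \<le> w *\<^sub>R 1" by (auto simp: dfeas_def)
  have iw: "0 \<le> 1 / w" using w by simp
  have "(1 / w) *\<^sub>R (w *\<^sub>R b) \<le> (1 / w) *\<^sub>R (B *v be - transpose Kpsi *v v)" by (rule vscale_mono[OF D2 iw])
  hence c1: "b \<le> B *v ((1 / w) *\<^sub>R be) - transpose Kpsi *v ((1 / w) *\<^sub>R v)"
    using w by (simp add: algebra_simps)
  have "(1 / w) *\<^sub>R (transpose Ks *v v) \<le> (1 / w) *\<^sub>R (w *\<^sub>R 1)" by (rule vscale_mono[OF D3 iw])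
  hence c2: "transpose Ks *v ((1 / w) *\<^sub>R v) \<le> 1" using w by (simp add: algebra_simps)
  show "((1 / w) *\<^sub>R be, (1 / w) *\<^sub>R v) \<in> P1set B b Kpsi Ks"
    unfolding P1set_def using c1 c2 vnn_scale[OF be0 iw] vnn_scale[OF v0 iw] by auto
  show "dobj x u al be v = al \<bullet> (b - A *v x) + u \<bullet> (hy - Gxy *v x)
            - w * (d \<bullet> ((1 / w) *\<^sub>R be) - ((1 / w) *\<^sub>R v) \<bullet> (k + Kx *v x))"
    using w by (simp add: dobj_def algebra_simps inner_commute[of d])
qed

lemma dfeas_C1:
  assumes "dfeas mu u al 0 be v"
  shows "0 \<le> be \<and> 0 \<le> v \<and> 0 \<le> B *v be - transpose Kpsi *v v \<and> transpose Ks *v v \<le> 0"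
  using assms by (auto simp: dfeas_def)

end




context lpdata
begin

abbreviation "ff x \<equiv> inner_value cy A B b d Gxy Gy hy Kpsi Ks Kx k x"

definition RHS :: "real^'n1 \<Rightarrow> real^'m \<Rightarrow> real^'p \<Rightarrow> real \<Rightarrow> real^'n2 \<Rightarrow> real^'q \<Rightarrow> real" where
  "RHS x psi uy w y v = psi \<bullet> (b - A *v x) + uy \<bullet> (hy - Gxy *v x) - w * (d \<bullet> y - v \<bullet> (k + Kx *v x))"

lemma LB:
  assumes "dfeas 1 u al w be v"
  shows "ereal (dobj x u al be v) \<le> ff x"
  unfolding inner_value_def
proof (rule Inf_greatest, clarify)
  fix y psi and s :: "real^'r"
  assume "(y, psi, s) \<in> inner_feasible A B b d Gxy Gy hy Kpsi Ks Kx k x"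
  from weak_duality[OF this assms] show "ereal (dobj x u al be v) \<le> ereal (cy \<bullet> y)" by simp
qed

lemma LBt:
  assumes "dfeas 1 u al w be v" "ff x \<le> ereal t"
  shows "dobj x u al be v \<le> t"
  using LB[OF assms(1), of x] assms(2) by (metis ereal_less_eq(3) order_trans)

lemma PQ_le:
  assumes "(ps, uy, w) \<in> P2set B d Gy cy" "(qy, qv) \<in> P1set B b Kpsi Ks"
  shows "ereal (RHS x ps uy w qy qv) \<le> ff x"
  using LB[OF PQ_dfeas(1)[OF assms]] PQ_dfeas(2)[OF assms] by (simp add: RHS_def)

lemma f_not_minf:
  assumes "P1set B b Kpsi Ks \<noteq> {}" "P2set B d Gy cy \<noteq> {}"
  shows "ff x \<noteq> -\<infinity>"
proof -
  obtain qy qv where q: "(qy, qv) \<in> P1set B b Kpsi Ks" using assms(1) by auto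
  obtain ps uy w where p: "(ps, uy, w) \<in> P2set B d Gy cy" using assms(2) by auto
  show ?thesis using PQ_le[OF p q, of x] by auto
qed

definition cons :: "real^'n1 \<Rightarrow> real \<Rightarrow> bool" where
  "cons x t \<longleftrightarrow>
        (\<forall>(psi, uy, w)\<in>extreme_points (P2set B d Gy cy). \<forall>(y, v)\<in>extreme_points (P1set B b Kpsi Ks).
           t \<ge> psi \<bullet> (b - A *v x) + uy \<bullet> (hy - Gxy *v x)
                - w * (d \<bullet> y - v \<bullet> (k + Kx *v x))) \<and>
        (\<forall>(y, v)\<in>extreme_rays (P1set B b Kpsi Ks). d \<bullet> y - v \<bullet> (k + Kx *v x) \<ge> 0) \<and>
        (\<forall>psi uy. (psi, uy, 0) \<in> extreme_rays (P2set B d Gy cy) \<longrightarrow>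
           0 \<ge> psi \<bullet> (b - A *v x) + uy \<bullet> (hy - Gxy *v x)) \<and>
        (\<forall>(y, v)\<in>extreme_points (P1set B b Kpsi Ks). \<forall>(psi, uy, w)\<in>extreme_rays (P2set B d Gy cy). w > 0 \<longrightarrow>
           0 \<ge> psi \<bullet> (b - A *v x) + uy \<bullet> (hy - Gxy *v x)
                - w * (d \<bullet> y - v \<bullet> (k + Kx *v x)))"

lemma RHS_lin:
  "RHS x (ps + l *\<^sub>R ps') (uy + l *\<^sub>R uy') (w + l * w') y v =
   RHS x ps uy w y v + l * (ps' \<bullet> (b - A *v x) + uy' \<bullet> (hy - Gxy *v x) - w' * (d \<bullet> y - v \<bullet> (k + Kx *v x)))"
  by (simp add: RHS_def algebra_simps inner_add_left)

lemma ext_mem: "z \<in> extreme_points S \<Longrightarrow> z \<in> S"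
  by (simp add: extreme_points_def extreme_point_of_def)

lemma ray_rec: "z \<in> extreme_rays S \<Longrightarrow> z \<in> recession_cone S"
  by (simp add: extreme_rays_def extreme_ray_of_def)

lemma ray1_C:
  assumes "P1set B b Kpsi Ks \<noteq> {}" "(ry, rv) \<in> recession_cone (P1set B b Kpsi Ks)"
  shows "0 \<le> ry \<and> 0 \<le> rv \<and> 0 \<le> B *v ry - transpose Kpsi *v rv \<and> transpose Ks *v rv \<le> 0"
proof -
  obtain z0 where "z0 \<in> polyh (S1 B b Kpsi Ks)" using assms(1) P1_eq by blast
  from rec_char[OF this] assms(2) have "\<forall>p\<in>S1 B b Kpsi Ks. fst p \<bullet> (ry, rv) \<le> 0"
    unfolding P1_eq[symmetric] by blast
  thus ?thesis using C1_eq by blast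
qed

lemma cons_of_f:
  assumes P1: "P1set B b Kpsi Ks \<noteq> {}" and P2: "P2set B d Gy cy \<noteq> {}" and ft: "ff x \<le> ereal t"
  shows "cons x t"
proof -
  obtain qy qv where q0: "(qy, qv) \<in> P1set B b Kpsi Ks" using P1 by auto
  obtain ps uy w where p0: "(ps, uy, w) \<in> P2set B d Gy cy" using P2 by auto
  have RHSle: "RHS x ps' uy' w' qy' qv' \<le> t" if "(ps', uy', w') \<in> P2set B d Gy cy" "(qy', qv') \<in> P1set B b Kpsi Ks"
    for ps' uy' w' qy' qv'
    using PQ_le[OF that, of x] ft by (metis ereal_less_eq(3) order_trans)
  have recRHS: "ps' \<bullet> (b - A *v x) + uy' \<bullet> (hy - Gxy *v x) - w' * (d \<bullet> qy' - qv' \<bullet> (k + Kx *v x)) \<le> 0"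
    if r: "(ps', uy', w') \<in> recession_cone (P2set B d Gy cy)" and q: "(qy', qv') \<in> P1set B b Kpsi Ks"
    for ps' uy' w' qy' qv'
  proof -
    have "\<forall>l\<ge>0. RHS x ps uy w qy' qv' + l * (ps' \<bullet> (b - A *v x) + uy' \<bullet> (hy - Gxy *v x) - w' * (d \<bullet> qy' - qv' \<bullet> (k + Kx *v x))) \<le> t"
    proof (intro allI impI)
      fix l :: real assume l: "l \<ge> 0"
      have "(ps, uy, w) + l *\<^sub>R (ps', uy', w') \<in> P2set B d Gy cy"
        using r p0 l unfolding recession_cone_def by blast
      hence "(ps + l *\<^sub>R ps', uy + l *\<^sub>R uy', w + l * w') \<in> P2set B d Gy cy" by simp
      from RHSle[OF this q] show "RHS x ps uy w qy' qv' + l * (ps' \<bullet> (b - A *v x) + uy' \<bullet> (hy - Gxy *v x) - w' * (d \<bullet> qy' - qv' \<bullet> (k + Kx *v x))) \<le> t"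
        by (simp add: RHS_lin)
    qed
    thus ?thesis by (rule slope_nonpos)
  qed
  show ?thesis unfolding cons_def
  proof (intro conjI)
    show "\<forall>(psi, uy, w)\<in>extreme_points (P2set B d Gy cy). \<forall>(y, v)\<in>extreme_points (P1set B b Kpsi Ks).
           t \<ge> psi \<bullet> (b - A *v x) + uy \<bullet> (hy - Gxy *v x) - w * (d \<bullet> y - v \<bullet> (k + Kx *v x))"
    proof (clarify)
      fix psi uy w y v assume "(psi, uy, w) \<in> extreme_points (P2set B d Gy cy)" "(y, v) \<in> extreme_points (P1set B b Kpsi Ks)"
      from RHSle[OF ext_mem[OF this(1)] ext_mem[OF this(2)]]
      show "t \<ge> psi \<bullet> (b - A *v x) + uy \<bullet> (hy - Gxy *v x) - w * (d \<bullet> y - v \<bullet> (k + Kx *v x))"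
        unfolding RHS_def .
    qed
    show "\<forall>(y, v)\<in>extreme_rays (P1set B b Kpsi Ks). d \<bullet> y - v \<bullet> (k + Kx *v x) \<ge> 0"
    proof (clarify)
      fix ry rv assume "(ry, rv) \<in> extreme_rays (P1set B b Kpsi Ks)"
      from ray1_C[OF P1 ray_rec[OF this]] have rc: "0 \<le> ry" "0 \<le> rv" "0 \<le> B *v ry - transpose Kpsi *v rv"
        "transpose Ks *v rv \<le> 0" by auto
      have df0: "dfeas 1 uy ps w (w *\<^sub>R qy) (w *\<^sub>R qv)" by (rule PQ_dfeas(1)[OF p0 q0])
      have "\<forall>l\<ge>0. dobj x uy ps (w *\<^sub>R qy) (w *\<^sub>R qv) + l * (- (d \<bullet> ry - rv \<bullet> (k + Kx *v x))) \<le> t"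
      proof (intro allI impI)
        fix l :: real assume l: "l \<ge> 0"
        have "dfeas (l * 0) (l *\<^sub>R 0) (l *\<^sub>R 0) (l * 0) (l *\<^sub>R ry) (l *\<^sub>R rv)"
          by (rule dfeas_scale[OF ray1_dfeas(1)[OF rc] l])
        from dfeas_add[OF df0 this]
        have "dfeas 1 uy ps w (w *\<^sub>R qy + l *\<^sub>R ry) (w *\<^sub>R qv + l *\<^sub>R rv)" by simp
        from LBt[OF this ft]
        have "dobj x uy ps (w *\<^sub>R qy + l *\<^sub>R ry) (w *\<^sub>R qv + l *\<^sub>R rv) \<le> t" .
        moreover have "dobj x uy ps (w *\<^sub>R qy + l *\<^sub>R ry) (w *\<^sub>R qv + l *\<^sub>R rv)
           = dobj x uy ps (w *\<^sub>R qy) (w *\<^sub>R qv) + l * dobj x 0 0 ry rv"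
          using dobj_add[of x uy 0 ps 0 "w *\<^sub>R qy" "l *\<^sub>R ry" "w *\<^sub>R qv" "l *\<^sub>R rv"]
            dobj_scale[of x l 0 0 ry rv] by simp
        ultimately show "dobj x uy ps (w *\<^sub>R qy) (w *\<^sub>R qv) + l * (- (d \<bullet> ry - rv \<bullet> (k + Kx *v x))) \<le> t"
          using ray1_dfeas(2)[OF rc, of x] by simp
      qed
      hence "- (d \<bullet> ry - rv \<bullet> (k + Kx *v x)) \<le> 0" by (rule slope_nonpos)
      thus "d \<bullet> ry - rv \<bullet> (k + Kx *v x) \<ge> 0" by simp
    qed
    show "\<forall>psi uy. (psi, uy, 0) \<in> extreme_rays (P2set B d Gy cy) \<longrightarrow>
           0 \<ge> psi \<bullet> (b - A *v x) + uy \<bullet> (hy - Gxy *v x)"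
    proof (intro allI impI)
      fix psi' uy' assume "(psi', uy', 0) \<in> extreme_rays (P2set B d Gy cy)"
      from recRHS[OF ray_rec[OF this] q0]
      show "0 \<ge> psi' \<bullet> (b - A *v x) + uy' \<bullet> (hy - Gxy *v x)" by simp
    qed
    show "\<forall>(y, v)\<in>extreme_points (P1set B b Kpsi Ks). \<forall>(psi, uy, w)\<in>extreme_rays (P2set B d Gy cy). w > 0 \<longrightarrow>
           0 \<ge> psi \<bullet> (b - A *v x) + uy \<bullet> (hy - Gxy *v x) - w * (d \<bullet> y - v \<bullet> (k + Kx *v x))"
      using recRHS ray_rec ext_mem by fast
  qed
qed

end




context lpdata
begin

lemma nl1: "\<And>z dd. (\<forall>t. z + t *\<^sub>R dd \<in> polyh (S1 B b Kpsi Ks)) \<Longrightarrow> dd = 0"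
  by (rule P1_noline)
lemma nl2: "\<And>z dd. (\<forall>t. z + t *\<^sub>R dd \<in> polyh (S2 B d Gy cy)) \<Longrightarrow> dd = 0"
  by (rule P2_noline)

lemma gpos:
  assumes P1: "P1set B b Kpsi Ks \<noteq> {}" and cs: "cons x t"
    and C: "0 \<le> y" "0 \<le> v" "0 \<le> B *v y - transpose Kpsi *v v" "transpose Ks *v v \<le> 0"
  shows "d \<bullet> y - v \<bullet> (k + Kx *v x) \<ge> 0"
proof -
  obtain z0 where z0: "z0 \<in> polyh (S1 B b Kpsi Ks)" using P1 P1_eq by blast
  have rays: "(d, - (k + Kx *v x)) \<bullet> r \<ge> 0" if "r \<in> extreme_rays (polyh (S1 B b Kpsi Ks))" for r
  proof -
    obtain ry rv where r: "r = (ry, rv)" by (cases r) auto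
    have "(ry, rv) \<in> extreme_rays (P1set B b Kpsi Ks)" using that r P1_eq by metis
    hence "d \<bullet> ry - rv \<bullet> (k + Kx *v x) \<ge> 0" using cs unfolding cons_def by blast
    thus ?thesis using r by (simp add: inner_commute[of rv] inner_diff_left inner_add_left inner_minus_left)
  qed
  have H: "\<forall>p\<in>S1 B b Kpsi Ks. fst p \<bullet> (y, v) \<le> 0" using C C1_eq by blast
  have "(d, - (k + Kx *v x)) \<bullet> (y, v) \<ge> 0"
    apply (rule rays_pos[OF finite_S1 z0])
    using nl1 rays H by blast+
  thus ?thesis by (simp add: inner_commute[of v] inner_diff_left inner_add_left inner_minus_left)
qed

lemma RHS_le_all:
  assumes P1: "P1set B b Kpsi Ks \<noteq> {}" and P2: "P2set B d Gy cy \<noteq> {}" and cs: "cons x t"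
    and p: "(ps, uy, w) \<in> P2set B d Gy cy" and q: "(qy, qv) \<in> P1set B b Kpsi Ks"
  shows "RHS x ps uy w qy qv \<le> t"
proof -
  define g where "g y v = d \<bullet> y - v \<bullet> (k + Kx *v x)" for y v
  have cpos1: "(d, - (k + Kx *v x)) \<bullet> dd \<ge> 0" if "\<forall>p\<in>S1 B b Kpsi Ks. fst p \<bullet> dd \<le> 0" for dd
  proof -
    obtain y v where dd: "dd = (y, v)" by (cases dd) auto
    have "0 \<le> y \<and> 0 \<le> v \<and> 0 \<le> B *v y - transpose Kpsi *v v \<and> transpose Ks *v v \<le> 0"
      using that dd C1_eq by blast
    hence "d \<bullet> y - v \<bullet> (k + Kx *v x) \<ge> 0" using gpos[OF P1 cs] by blast
    thus ?thesis using dd by (simp add: inner_commute[of v] inner_diff_left inner_add_left inner_minus_left)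
  qed
  have qP: "(qy, qv) \<in> polyh (S1 B b Kpsi Ks)" using q P1_eq by blast
  obtain j where jx: "j extreme_point_of polyh (S1 B b Kpsi Ks)"
    and jle: "(d, - (k + Kx *v x)) \<bullet> j \<le> (d, - (k + Kx *v x)) \<bullet> (qy, qv)"
  proof -
    have "\<exists>j. j extreme_point_of polyh (S1 B b Kpsi Ks) \<and> (d, - (k + Kx *v x)) \<bullet> j \<le> (d, - (k + Kx *v x)) \<bullet> (qy, qv)"
      apply (rule min_at_extreme[OF finite_S1])
      using nl1 cpos1 qP by blast+
    thus ?thesis using that by blast
  qed
  obtain jy jv where j: "j = (jy, jv)" by (cases j) auto
  have jJ: "(jy, jv) \<in> extreme_points (P1set B b Kpsi Ks)"
    using jx j by (simp add: extreme_points_def P1_eq)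
  have gle: "g jy jv \<le> g qy qv" using jle j by (simp add: g_def inner_commute[of _ "k + Kx *v x"] inner_diff_left inner_add_left inner_minus_left)
  have w0: "0 \<le> w" using p by (simp add: P2set_def)
  have step1: "RHS x ps uy w qy qv \<le> RHS x ps uy w jy jv"
    using mult_left_mono[OF gle w0] by (simp add: RHS_def g_def)
  define c2 where "c2 = (- (b - A *v x), - (hy - Gxy *v x), g jy jv)"
  have c2e: "c2 \<bullet> (ps', uy', w') = - RHS x ps' uy' w' jy jv" for ps' uy' w'
    by (simp add: c2_def RHS_def g_def algebra_simps inner_commute)
  obtain z0 where z0: "z0 \<in> polyh (S2 B d Gy cy)" using P2 P2_eq by blast
  have rays2: "c2 \<bullet> r \<ge> 0" if "r \<in> extreme_rays (polyh (S2 B d Gy cy))" for r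
  proof -
    obtain rp ru rw where r: "r = (rp, ru, rw)" by (cases r) auto
    have rR: "(rp, ru, rw) \<in> extreme_rays (P2set B d Gy cy)" using that r P2_eq by metis
    have "(rp, ru, rw) \<in> recession_cone (polyh (S2 B d Gy cy))" using ray_rec[OF rR] P2_eq by metis
    hence "\<forall>p\<in>S2 B d Gy cy. fst p \<bullet> (rp, ru, rw) \<le> 0" using rec_char[OF z0] by blast
    hence rw0: "0 \<le> rw" using C2_eq by blast
    show ?thesis
    proof (cases "rw = 0")
      case True
      hence "(rp, ru, 0) \<in> extreme_rays (P2set B d Gy cy)" using rR by simp
      hence "0 \<ge> rp \<bullet> (b - A *v x) + ru \<bullet> (hy - Gxy *v x)" using cs unfolding cons_def by blast
      thus ?thesis using r True by (simp add: c2e RHS_def)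
    next
      case False
      hence "rw > 0" using rw0 by simp
      hence "0 \<ge> rp \<bullet> (b - A *v x) + ru \<bullet> (hy - Gxy *v x) - rw * (d \<bullet> jy - jv \<bullet> (k + Kx *v x))"
        using cs jJ rR unfolding cons_def by fast
      thus ?thesis using r by (simp add: c2e RHS_def)
    qed
  qed
  have cpos2: "c2 \<bullet> dd \<ge> 0" if "\<forall>p\<in>S2 B d Gy cy. fst p \<bullet> dd \<le> 0" for dd
    apply (rule rays_pos[OF finite_S2 z0])
    using nl2 rays2 that by blast+
  have pP: "(ps, uy, w) \<in> polyh (S2 B d Gy cy)" using p P2_eq by blast
  obtain j2 where j2x: "j2 extreme_point_of polyh (S2 B d Gy cy)" and j2le: "c2 \<bullet> j2 \<le> c2 \<bullet> (ps, uy, w)"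
  proof -
    have "\<exists>j2. j2 extreme_point_of polyh (S2 B d Gy cy) \<and> c2 \<bullet> j2 \<le> c2 \<bullet> (ps, uy, w)"
      apply (rule min_at_extreme[OF finite_S2])
      using nl2 cpos2 pP by blast+
    thus ?thesis using that by blast
  qed
  obtain j2p j2u j2w where j2: "j2 = (j2p, j2u, j2w)" by (cases j2) auto
  have j2J: "(j2p, j2u, j2w) \<in> extreme_points (P2set B d Gy cy)"
    using j2x j2 by (simp add: extreme_points_def P2_eq)
  have step2: "RHS x ps uy w jy jv \<le> RHS x j2p j2u j2w jy jv" using j2le j2 by (simp add: c2e)
  have "RHS x j2p j2u j2w jy jv \<le> t" using cs j2J jJ unfolding cons_def RHS_def by fast
  thus ?thesis using step1 step2 by linarith
qed

end




context lpdata
begin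

lemma DB:
  assumes P1: "P1set B b Kpsi Ks \<noteq> {}" and P2: "P2set B d Gy cy \<noteq> {}" and cs: "cons x t"
    and df: "dfeas 1 u al w be v"
  shows "dobj x u al be v \<le> t"
proof (cases "w > 0")
  case True
  have p: "(al, u, w) \<in> P2set B d Gy cy" by (rule dfeas_P2[OF df])
  from RHS_le_all[OF P1 P2 cs p dfeas_P1(1)[OF df True]] dfeas_P1(2)[OF df True, of x]
  show ?thesis by (simp add: RHS_def)
next
  case False
  hence w0: "w = 0" using df by (simp add: dfeas_def)
  hence df0: "dfeas 1 u al 0 be v" using df by simp
  have "d \<bullet> be - v \<bullet> (k + Kx *v x) \<ge> 0"
    using dfeas_C1[OF df0] gpos[OF P1 cs] by blast
  moreover obtain qy qv where q0: "(qy, qv) \<in> P1set B b Kpsi Ks" using P1 by auto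
  have "RHS x al u 0 qy qv \<le> t" using RHS_le_all[OF P1 P2 cs dfeas_P2[OF df0] q0] .
  ultimately show ?thesis by (simp add: RHS_def dobj_def inner_commute[of be])
qed

lemma HOM:
  assumes P1: "P1set B b Kpsi Ks \<noteq> {}" and P2: "P2set B d Gy cy \<noteq> {}" and cs: "cons x t"
    and df: "dfeas mu u al w be v" and mu: "mu \<ge> 0"
  shows "dobj x u al be v \<le> mu * t"
proof (cases "mu > 0")
  case True
  have "0 \<le> 1 / mu" using True by simp
  from dfeas_scale[OF df this] True
  have "dfeas 1 ((1 / mu) *\<^sub>R u) ((1 / mu) *\<^sub>R al) ((1 / mu) * w) ((1 / mu) *\<^sub>R be) ((1 / mu) *\<^sub>R v)"
    by simp
  from DB[OF P1 P2 cs this] have "(1 / mu) * dobj x u al be v \<le> t" by (simp add: dobj_scale)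
  thus ?thesis using True by (simp add: field_simps)
next
  case False
  hence mu0: "mu = 0" using mu by simp
  obtain qy qv where q0: "(qy, qv) \<in> P1set B b Kpsi Ks" using P1 by auto
  obtain ps uy w0 where p0: "(ps, uy, w0) \<in> P2set B d Gy cy" using P2 by auto
  have df1: "dfeas 1 uy ps w0 (w0 *\<^sub>R qy) (w0 *\<^sub>R qv)" by (rule PQ_dfeas(1)[OF p0 q0])
  have "\<forall>l\<ge>0. dobj x uy ps (w0 *\<^sub>R qy) (w0 *\<^sub>R qv) + l * dobj x u al be v \<le> t"
  proof (intro allI impI)
    fix l :: real assume l: "l \<ge> 0"
    from dfeas_add[OF df1 dfeas_scale[OF df l]] mu0
    have "dfeas 1 (uy + l *\<^sub>R u) (ps + l *\<^sub>R al) (w0 + l * w) (w0 *\<^sub>R qy + l *\<^sub>R be) (w0 *\<^sub>R qv + l *\<^sub>R v)"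
      by simp
    from DB[OF P1 P2 cs this]
    show "dobj x uy ps (w0 *\<^sub>R qy) (w0 *\<^sub>R qv) + l * dobj x u al be v \<le> t"
      by (simp add: dobj_add dobj_scale)
  qed
  hence "dobj x u al be v \<le> 0" by (rule slope_nonpos)
  thus ?thesis using mu0 by simp
qed

end




lemma sumR5:
  fixes f :: "'p::finite + ('m::finite + ('n::finite + ('q::finite + bool))) \<Rightarrow> real"
  shows "(\<Sum>r\<in>UNIV. f r) = (\<Sum>p\<in>UNIV. f (Inl p)) + (\<Sum>i\<in>UNIV. f (Inr (Inl i)))
     + (\<Sum>j\<in>UNIV. f (Inr (Inr (Inl j)))) + (\<Sum>l\<in>UNIV. f (Inr (Inr (Inr (Inl l)))))
     + f (Inr (Inr (Inr (Inr True)))) + f (Inr (Inr (Inr (Inr False))))"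
  by (simp add: sum_UNIV_plus UNIV_bool add_ac)

lemma sumC3:
  fixes f :: "'n::finite + ('m::finite + 'r::finite) \<Rightarrow> real"
  shows "(\<Sum>c\<in>UNIV. f c) = (\<Sum>j\<in>UNIV. f (Inl j)) + (\<Sum>i\<in>UNIV. f (Inr (Inl i))) + (\<Sum>l\<in>UNIV. f (Inr (Inr l)))"
  by (simp add: sum_UNIV_plus add_ac)

lemma trc: "(transpose (M::real^'n^'m) *v u) $ j = (\<Sum>p\<in>UNIV. M $ p $ j * u $ p)"
  by (simp add: matrix_vector_mult_def transpose_def)

lemma mvc: "((M::real^'n^'m) *v u) $ j = (\<Sum>p\<in>UNIV. M $ j $ p * u $ p)"
  by (simp add: matrix_vector_mult_def)

context lpdata
begin

definition mm :: "'p + ('m + ('n2 + ('q + bool))) \<Rightarrow> 'n2 + ('m + 'r) \<Rightarrow> real" where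
  "mm r c = (case r of
      Inl p \<Rightarrow> (case c of Inl j \<Rightarrow> Gy $ p $ j | Inr _ \<Rightarrow> 0)
    | Inr (Inl i) \<Rightarrow> (case c of Inl j \<Rightarrow> B $ i $ j | Inr _ \<Rightarrow> 0)
    | Inr (Inr (Inl j)) \<Rightarrow> (case c of Inl _ \<Rightarrow> 0 | Inr (Inl i) \<Rightarrow> - B $ i $ j | Inr (Inr _) \<Rightarrow> 0)
    | Inr (Inr (Inr (Inl l))) \<Rightarrow> (case c of Inl _ \<Rightarrow> 0 | Inr (Inl i) \<Rightarrow> Kpsi $ l $ i | Inr (Inr s) \<Rightarrow> Ks $ l $ s)
    | Inr (Inr (Inr (Inr bb))) \<Rightarrow> (if bb then (case c of Inl j \<Rightarrow> - d $ j | Inr (Inl i) \<Rightarrow> b $ i | Inr (Inr _) \<Rightarrow> -1)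
                                  else (case c of Inl j \<Rightarrow> - cy $ j | Inr _ \<Rightarrow> 0)))"

definition hh :: "real^'n1 \<Rightarrow> real \<Rightarrow> 'p + ('m + ('n2 + ('q + bool))) \<Rightarrow> real" where
  "hh x t r = (case r of
      Inl p \<Rightarrow> (hy - Gxy *v x) $ p
    | Inr (Inl i) \<Rightarrow> (b - A *v x) $ i
    | Inr (Inr (Inl j)) \<Rightarrow> - d $ j
    | Inr (Inr (Inr (Inl l))) \<Rightarrow> (k + Kx *v x) $ l
    | Inr (Inr (Inr (Inr bb))) \<Rightarrow> (if bb then 0 else - t))"

lemma farkas_hyp:
  assumes P1: "P1set B b Kpsi Ks \<noteq> {}" and P2: "P2set B d Gy cy \<noteq> {}" and cs: "cons x t"
    and pp0: "\<forall>r. pp r \<ge> 0" and col: "\<forall>c. (\<Sum>r\<in>UNIV. mm r c * pp r) \<le> 0"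
  shows "(\<Sum>r\<in>UNIV. pp r * hh x t r) \<le> 0"
proof -
  define u :: "real^'p" where "u = (\<chi> p. pp (Inl p))"
  define al :: "real^'m" where "al = (\<chi> i. pp (Inr (Inl i)))"
  define be :: "real^'n2" where "be = (\<chi> j. pp (Inr (Inr (Inl j))))"
  define v :: "real^'q" where "v = (\<chi> l. pp (Inr (Inr (Inr (Inl l)))))"
  define w where "w = pp (Inr (Inr (Inr (Inr True))))"
  define mu where "mu = pp (Inr (Inr (Inr (Inr False))))"
  have nn: "0 \<le> u" "0 \<le> al" "0 \<le> be" "0 \<le> v" "0 \<le> w" "0 \<le> mu"
    using pp0 by (auto simp: u_def al_def be_def v_def w_def mu_def less_eq_vec_def)
  have D1: "transpose Gy *v u + transpose B *v al - w *\<^sub>R d \<le> mu *\<^sub>R cy"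
    unfolding less_eq_vec_def
  proof
    fix j
    have "(\<Sum>r\<in>UNIV. mm r (Inl j) * pp r) \<le> 0" using col by blast
    hence "(\<Sum>p\<in>UNIV. Gy $ p $ j * pp (Inl p)) + (\<Sum>i\<in>UNIV. B $ i $ j * pp (Inr (Inl i)))
        - d $ j * w - cy $ j * mu \<le> 0"
      by (simp add: sumR5 mm_def w_def mu_def)
    thus "(transpose Gy *v u + transpose B *v al - w *\<^sub>R d) $ j \<le> (mu *\<^sub>R cy) $ j"
      by (simp add: trc u_def al_def algebra_simps)
  qed
  have D2: "w *\<^sub>R b \<le> B *v be - transpose Kpsi *v v"
    unfolding less_eq_vec_def
  proof
    fix i
    have "(\<Sum>r\<in>UNIV. mm r (Inr (Inl i)) * pp r) \<le> 0" using col by blast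
    hence "- (\<Sum>j\<in>UNIV. B $ i $ j * pp (Inr (Inr (Inl j)))) + (\<Sum>l\<in>UNIV. Kpsi $ l $ i * pp (Inr (Inr (Inr (Inl l)))))
        + b $ i * w \<le> 0"
      by (simp add: sumR5 mm_def w_def sum_negf)
    thus "(w *\<^sub>R b) $ i \<le> (B *v be - transpose Kpsi *v v) $ i"
      by (simp add: trc mvc be_def v_def algebra_simps transpose_def)
  qed
  have D3: "transpose Ks *v v \<le> w *\<^sub>R 1"
    unfolding less_eq_vec_def
  proof
    fix s
    have "(\<Sum>r\<in>UNIV. mm r (Inr (Inr s)) * pp r) \<le> 0" using col by blast
    hence "(\<Sum>l\<in>UNIV. Ks $ l $ s * pp (Inr (Inr (Inr (Inl l))))) - w \<le> 0"
      by (simp add: sumR5 mm_def w_def)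
    thus "(transpose Ks *v v) $ s \<le> (w *\<^sub>R 1) $ s"
      by (simp add: trc v_def)
  qed
  have df: "dfeas mu u al w be v" unfolding dfeas_def using nn D1 D2 D3 by blast
  have "dobj x u al be v \<le> mu * t" by (rule HOM[OF P1 P2 cs df nn(6)])
  moreover have "(\<Sum>r\<in>UNIV. pp r * hh x t r) = dobj x u al be v - mu * t"
    by (simp add: sumR5 hh_def dobj_def inner_vec_def u_def al_def be_def v_def mu_def sum_negf algebra_simps)
  ultimately show ?thesis by simp
qed

lemma f_of_cons:
  assumes P1: "P1set B b Kpsi Ks \<noteq> {}" and P2: "P2set B d Gy cy \<noteq> {}" and cs: "cons x t"
  shows "ff x \<le> ereal t"
proof -
  have "\<exists>z. (\<forall>c. z c \<ge> 0) \<and> (\<forall>r. (\<Sum>c\<in>UNIV. mm r c * z c) \<ge> hh x t r)"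
    by (rule farkas) (rule farkas_hyp[OF P1 P2 cs], blast+)
  then obtain z where z0: "\<forall>c. z c \<ge> 0" and row: "\<forall>r. (\<Sum>c\<in>UNIV. mm r c * z c) \<ge> hh x t r" by blast
  define y :: "real^'n2" where "y = (\<chi> j. z (Inl j))"
  define psi :: "real^'m" where "psi = (\<chi> i. z (Inr (Inl i)))"
  define s :: "real^'r" where "s = (\<chi> l. z (Inr (Inr l)))"
  have nn: "0 \<le> y" "0 \<le> psi" "0 \<le> s" using z0 by (auto simp: y_def psi_def s_def less_eq_vec_def)
  have R1: "Gy *v y \<ge> hy - Gxy *v x" unfolding less_eq_vec_def
  proof
    fix p
    have "(\<Sum>c\<in>UNIV. mm (Inl p) c * z c) \<ge> hh x t (Inl p)" using row by blast
    thus "(hy - Gxy *v x) $ p \<le> (Gy *v y) $ p" by (simp add: sumC3 mm_def hh_def mvc y_def)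
  qed
  have R2: "B *v y \<ge> b - A *v x" unfolding less_eq_vec_def
  proof
    fix i
    have "(\<Sum>c\<in>UNIV. mm (Inr (Inl i)) c * z c) \<ge> hh x t (Inr (Inl i))" using row by blast
    thus "(b - A *v x) $ i \<le> (B *v y) $ i" by (simp add: sumC3 mm_def hh_def mvc y_def)
  qed
  have R3: "- (transpose B *v psi) \<ge> - d" unfolding less_eq_vec_def
  proof
    fix j
    have "(\<Sum>c\<in>UNIV. mm (Inr (Inr (Inl j))) c * z c) \<ge> hh x t (Inr (Inr (Inl j)))" using row by blast
    thus "(- d) $ j \<le> (- (transpose B *v psi)) $ j" by (simp add: sumC3 mm_def hh_def trc psi_def sum_negf)
  qed
  have R4: "- (d \<bullet> y) + psi \<bullet> b - s \<bullet> 1 \<ge> 0"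
  proof -
    have "(\<Sum>c\<in>UNIV. mm (Inr (Inr (Inr (Inr True)))) c * z c) \<ge> hh x t (Inr (Inr (Inr (Inr True))))"
      using row by blast
    thus ?thesis by (simp add: sumC3 mm_def hh_def inner_vec_def y_def psi_def s_def sum_negf mult.commute)
  qed
  have R5: "Kpsi *v psi + Ks *v s \<ge> k + Kx *v x" unfolding less_eq_vec_def
  proof
    fix l
    have "(\<Sum>c\<in>UNIV. mm (Inr (Inr (Inr (Inl l)))) c * z c) \<ge> hh x t (Inr (Inr (Inr (Inl l))))" using row by blast
    thus "(k + Kx *v x) $ l \<le> (Kpsi *v psi + Ks *v s) $ l" by (simp add: sumC3 mm_def hh_def mvc psi_def s_def)
  qed
  have R6: "cy \<bullet> y \<le> t"
  proof -
    have "(\<Sum>c\<in>UNIV. mm (Inr (Inr (Inr (Inr False)))) c * z c) \<ge> hh x t (Inr (Inr (Inr (Inr False))))"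
      using row by blast
    thus ?thesis by (simp add: sumC3 mm_def hh_def inner_vec_def y_def sum_negf)
  qed
  have feas: "(y, psi, s) \<in> inner_feasible A B b d Gxy Gy hy Kpsi Ks Kx k x"
    unfolding inner_feasible_def using nn R1 R2 R3 R4 R5 by blast
  have "ff x \<le> ereal (cy \<bullet> y)" unfolding inner_value_def
    by (rule Inf_lower) (use feas in force)
  also have "\<dots> \<le> ereal t" using R6 by simp
  finally show ?thesis .
qed

end


theorem corollary1:
  fixes cx :: "real^'n1" and I :: "'n1 set"
    and A :: "real^'n1^'m" and B :: "real^'n2^'m" and b :: "real^'m"
    and cy :: "real^'n2" and d :: "real^'n2"
    and Gxy :: "real^'n1^'p" and Gy :: "real^'n2^'p" and hy :: "real^'p"
    and Kpsi :: "real^'m^'q" and Ks :: "real^'r^'q" and Kx :: "real^'n1^'q" and k :: "real^'q"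
  assumes "P1set B b Kpsi Ks \<noteq> {}" and "P2set B d Gy cy \<noteq> {}"
  shows "(let f = inner_value cy A B b d Gxy Gy hy Kpsi Ks Kx k;
              F = reform_feasible I cy A B b d Gxy Gy hy Kpsi Ks Kx k;
              valMIP = Inf ((\<lambda>x. ereal (cx \<bullet> x) + f x) ` Xset I);
              valR = Inf ((\<lambda>(x, t). ereal (cx \<bullet> x + t)) ` F)
          in valMIP = valR \<and>
             (\<forall>x. (x \<in> Xset I \<and> f x < \<infinity> \<and> ereal (cx \<bullet> x) + f x = valMIP) \<longleftrightarrow>
                  (\<exists>t. (x, t) \<in> F \<and> ereal (cx \<bullet> x + t) = valR)))"
proof -
  define f where "f = inner_value cy A B b d Gxy Gy hy Kpsi Ks Kx k"
  define F where "F = reform_feasible I cy A B b d Gxy Gy hy Kpsi Ks Kx k"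
  define valMIP where "valMIP = Inf ((\<lambda>x. ereal (cx \<bullet> x) + f x) ` Xset I)"
  define valR where "valR = Inf ((\<lambda>(x, t). ereal (cx \<bullet> x + t)) ` F)"
  have Fchar: "(x, t) \<in> F \<longleftrightarrow> x \<in> Xset I \<and> f x \<le> ereal t" for x t
  proof -
    have "(x, t) \<in> F \<longleftrightarrow> x \<in> Xset I \<and> lpdata.cons A B b cy d Gxy Gy hy Kpsi Ks Kx k x t"
      unfolding F_def reform_feasible_def lpdata.cons_def Let_def by simp
    moreover have "lpdata.cons A B b cy d Gxy Gy hy Kpsi Ks Kx k x t \<longleftrightarrow> f x \<le> ereal t"
      using lpdata.cons_of_f[OF assms] lpdata.f_of_cons[OF assms] unfolding f_def by blast
    ultimately show ?thesis by blast
  qed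
  have fnm: "f x \<noteq> -\<infinity>" for x
    using lpdata.f_not_minf[OF assms] unfolding f_def by blast
  have le1: "valMIP \<le> valR" unfolding valR_def
  proof (rule Inf_greatest, clarify)
    fix x t assume "(x, t) \<in> F"
    hence x: "x \<in> Xset I" and ft: "f x \<le> ereal t" using Fchar by auto
    have "valMIP \<le> ereal (cx \<bullet> x) + f x" unfolding valMIP_def using x by (intro Inf_lower) auto
    also have "\<dots> \<le> ereal (cx \<bullet> x) + ereal t" using ft by (intro add_left_mono)
    finally show "valMIP \<le> ereal (cx \<bullet> x + t)" by simp
  qed
  have le2: "valR \<le> valMIP" unfolding valMIP_def
  proof (rule Inf_greatest, clarify)
    fix x assume x: "x \<in> Xset I"
    show "valR \<le> ereal (cx \<bullet> x) + f x"
    proof (cases "f x = \<infinity>")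
      case True thus ?thesis by simp
    next
      case False
      then obtain r where r: "f x = ereal r" using fnm[of x] by (cases "f x") auto
      hence "(x, r) \<in> F" using Fchar x by simp
      hence "valR \<le> ereal (cx \<bullet> x + r)" unfolding valR_def by (intro Inf_lower) force
      thus ?thesis using r by simp
    qed
  qed
  have eq: "valMIP = valR" using le1 le2 by (rule antisym)
  have opt: "(x \<in> Xset I \<and> f x < \<infinity> \<and> ereal (cx \<bullet> x) + f x = valMIP) \<longleftrightarrow>
                  (\<exists>t. (x, t) \<in> F \<and> ereal (cx \<bullet> x + t) = valR)" for x
  proof
    assume H: "x \<in> Xset I \<and> f x < \<infinity> \<and> ereal (cx \<bullet> x) + f x = valMIP"
    then obtain r where r: "f x = ereal r" using fnm[of x] by (cases "f x") auto
    hence "(x, r) \<in> F" using Fchar H by simp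
    moreover have "ereal (cx \<bullet> x + r) = valR" using H r eq by simp
    ultimately show "\<exists>t. (x, t) \<in> F \<and> ereal (cx \<bullet> x + t) = valR" by blast
  next
    assume "\<exists>t. (x, t) \<in> F \<and> ereal (cx \<bullet> x + t) = valR"
    then obtain t where t: "(x, t) \<in> F" "ereal (cx \<bullet> x + t) = valR" by blast
    hence x: "x \<in> Xset I" and ft: "f x \<le> ereal t" using Fchar by auto
    then obtain r where r: "f x = ereal r" using fnm[of x] by (cases "f x") auto
    have a1: "valMIP \<le> ereal (cx \<bullet> x) + f x" unfolding valMIP_def using x by (intro Inf_lower) auto
    have a2: "ereal (cx \<bullet> x) + f x \<le> ereal (cx \<bullet> x) + ereal t" using ft by (intro add_left_mono)
    have a3: "ereal (cx \<bullet> x) + ereal t = valMIP" using t(2) eq by simp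
    have "ereal (cx \<bullet> x) + f x = valMIP" using a1 a2 a3 by (metis antisym)
    thus "x \<in> Xset I \<and> f x < \<infinity> \<and> ereal (cx \<bullet> x) + f x = valMIP" using x r by simp
  qed
  show ?thesis unfolding Let_def f_def[symmetric] F_def[symmetric] valMIP_def[symmetric] valR_def[symmetric]
    using eq opt by blast
qed

end
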